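(* Let $(S^1,V^1)$ and $(S^2,V^2)$ be normal $\mathbb{Q}$-VASR abstractions of equal concrete dimension. Then the $\mathbb{Q}$-VASR abstraction $(S,V)$ computed by the join algorithm described in the context is normal and is a least upper bound of $(S^1,V^1)$ and $(S^2,V^2)$ with respect to $\preceq$.
   Context: A $\mathbb{Q}$-VASR of dimension $d$ is a finite set $V\subseteq\{0,1\}^d\times\mathbb{Q}^d$ of transformers $(\vec r,\vec a)$; $\vec u\to_V\vec v$ iff $\vec v=\vec r*\vec u+\vec a$ for some $(\vec r,\vec a)\in V$ ($*$ pointwise product). For transition systems on $\mathbb{Q}^n,\mathbb{Q}^m$, a linear simulation $A\Vdash_S B$ is $S\in\mathbb{Q}^{m\times n}$ with $\vec u\to_A\vec v\Rightarrow S\vec u\to_BS\vec v$. A $\mathbb{Q}$-VASR abstraction is a pair $(S,V)$ with $S\in\mathbb{Q}^{d\times n}$ and $V$ a $d$-dimensional $\mathbb{Q}$-VASR ($n$ = concrete dimension, $d$ = abstract dimension). Preorder: $(S^1,V^1)\preceq(S^2,V^2)$ (abstract dimensions $d,e$) iff there exists $T\in\mathbb{Q}^{e\times d}$ with $V^1\Vdash_TV^2$ and $TS^1=S^2$. An upper bound of two abstractions is an abstraction $\succeq$ both; a least upper bound is an upper bound $\preceq$ every upper bound. Coherence: dimensions $i,j$ of $V$ are coherent if $r_i=r_j$ for all $(\vec r,\vec a)\in V$; equivalence classes are coherence classes. For a coherence class $C=\{c_1<\dots<c_k\}$ of a $d$-dimensional $V$, $\pi_C$ is the $k\times d$ matrix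 with rows $\vec e_{c_1},\dots,\vec e_{c_k}$. A row vector or matrix is coherent w.r.t. $V$ if each row has nonzero entries only in columns of one coherence class. $(S,V)$ is normal if there is no nonzero row vector $\vec z$ coherent w.r.t. $V$ with $\vec zS=0$. For $T$ coherent w.r.t. $V$ with no zero rows, $\mathrm{image}(V,T)=\{(T\rhd\vec r,T\vec a):(\vec r,\vec a)\in V\}$, with $(T\rhd\vec r)_i=r_j$ for any $j$ with $T_{ij}\neq0$. For matrices $A,B$ with equal numbers of columns, $\mathit{pushout}(A,B)$ returns $(U^1,U^2)$ whose row pairs $(U^1_i,U^2_i)$ form a basis of the vector space $\{(\vec u^1,\vec u^2):\vec u^1A=\vec u^2B\}$. Join algorithm on input $(S^1,V^1),(S^2,V^2)$: start with empty matrices $S,T^1,T^2$. For each coherence class $C^1$ of $V^1$ and each coherence class $C^2$ of $V^2$: compute $(U^1,U^2)=\mathit{pushout}(\pi_{C^1}S^1,\pi_{C^2}S^2)$; append the rows of $U^1\pi_{C^1}S^1$ to $S$, the rows of $U^1\pi_{C^1}$ to $T^1$, and the rows of $U^2\pi_{C^2}$ to $T^2$. Then set $V=\mathrm{image}(V^1,T^1)\cup\mathrm{image}(V^2,T^2)$ and return $(S,V)$. *)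

theory Defs
  imports "Jordan_Normal_Form.Matrix"
begin

text \<open>Vectors/matrices over the rationals are Jordan_Normal_Form's rat vec / rat mat.
  A row vector z times a matrix A (written z A in the paper) is rendered as
  transpose_mat A *v z.\<close>

type_synonym qvasr = "(rat vec \<times> rat vec) set"

definition qvasr :: "nat \<Rightarrow> qvasr \<Rightarrow> bool" where
  "qvasr d V \<longleftrightarrow> finite V \<and>
     (\<forall>(r,a)\<in>V. r \<in> carrier_vec d \<and> a \<in> carrier_vec d \<and> (\<forall>i<d. r $ i = 0 \<or> r $ i = 1))"

definition qvasr_step :: "qvasr \<Rightarrow> rat vec \<Rightarrow> rat vec \<Rightarrow> bool" where
  "qvasr_step V u v \<longleftrightarrow>
     (\<exists>(r,a)\<in>V. dim_vec u = dim_vec r \<and> v = vec (dim_vec r) (\<lambda>i. r $ i * u $ i) + a)"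

definition lin_sim ::
  "nat \<Rightarrow> (rat vec \<Rightarrow> rat vec \<Rightarrow> bool) \<Rightarrow> rat mat \<Rightarrow> (rat vec \<Rightarrow> rat vec \<Rightarrow> bool) \<Rightarrow> bool" where
  "lin_sim n A S B \<longleftrightarrow> dim_col S = n \<and>
     (\<forall>u v. u \<in> carrier_vec n \<longrightarrow> v \<in> carrier_vec n \<longrightarrow> A u v \<longrightarrow> B (S *\<^sub>v u) (S *\<^sub>v v))"

definition is_abs :: "nat \<Rightarrow> rat mat \<Rightarrow> qvasr \<Rightarrow> bool" where
  "is_abs n S V \<longleftrightarrow> dim_col S = n \<and> qvasr (dim_row S) V"

definition abs_le :: "rat mat \<times> qvasr \<Rightarrow> rat mat \<times> qvasr \<Rightarrow> bool" where
  "abs_le A B \<longleftrightarrow> (case A of (S1,V1) \<Rightarrow> case B of (S2,V2) \<Rightarrow>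
     (\<exists>T \<in> carrier_mat (dim_row S2) (dim_row S1).
        lin_sim (dim_row S1) (qvasr_step V1) T (qvasr_step V2) \<and> T * S1 = S2))"

definition is_upper_bound :: "nat \<Rightarrow> rat mat \<times> qvasr \<Rightarrow> rat mat \<times> qvasr \<Rightarrow> rat mat \<times> qvasr \<Rightarrow> bool" where
  "is_upper_bound n A B C \<longleftrightarrow> is_abs n (fst C) (snd C) \<and> abs_le A C \<and> abs_le B C"

definition abs_lub :: "nat \<Rightarrow> rat mat \<times> qvasr \<Rightarrow> rat mat \<times> qvasr \<Rightarrow> rat mat \<times> qvasr \<Rightarrow> bool" where
  "abs_lub n A B C \<longleftrightarrow> is_upper_bound n A B C \<and>
     (\<forall>C'. is_upper_bound n A B C' \<longrightarrow> abs_le C C')"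

definition coherent_dims :: "qvasr \<Rightarrow> nat \<Rightarrow> nat \<Rightarrow> bool" where
  "coherent_dims V i j \<longleftrightarrow> (\<forall>(r,a)\<in>V. r $ i = r $ j)"

definition coh_classes :: "nat \<Rightarrow> qvasr \<Rightarrow> nat set set" where
  "coh_classes d V = {{j. j < d \<and> coherent_dims V i j} | i. i < d}"

definition coherent_row :: "nat \<Rightarrow> qvasr \<Rightarrow> rat vec \<Rightarrow> bool" where
  "coherent_row d V z \<longleftrightarrow> (\<exists>C\<in>coh_classes d V. \<forall>j<d. z $ j \<noteq> 0 \<longrightarrow> j \<in> C)"

definition normal_abs :: "rat mat \<Rightarrow> qvasr \<Rightarrow> bool" where
  "normal_abs S V \<longleftrightarrow> \<not> (\<exists>z \<in> carrier_vec (dim_row S).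
      z \<noteq> 0\<^sub>v (dim_row S) \<and> coherent_row (dim_row S) V z \<and>
      transpose_mat S *\<^sub>v z = 0\<^sub>v (dim_col S))"

definition pi_mat :: "nat \<Rightarrow> nat set \<Rightarrow> rat mat" where
  "pi_mat d C = mat_of_rows d (map (unit_vec d) (sorted_list_of_set C))"

definition vasr_image :: "qvasr \<Rightarrow> rat mat \<Rightarrow> qvasr" where
  "vasr_image V T = {(vec (dim_row T) (\<lambda>i. r $ (SOME j. j < dim_col T \<and> T $$ (i,j) \<noteq> 0)),
                      T *\<^sub>v a) | r a. (r,a) \<in> V}"

text \<open>Specification of pushout(A,B) = (U1,U2): the row pairs (U1_i,U2_i) form a basis of
  {(u1,u2). u1 A = u2 B}, written out: they are linearly independent and span that space.\<close>
definition is_pushout :: "rat mat \<Rightarrow> rat mat \<Rightarrow> rat mat \<Rightarrow> rat mat \<Rightarrow> bool" where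
  "is_pushout A B U1 U2 \<longleftrightarrow>
     dim_col A = dim_col B \<and>
     U1 \<in> carrier_mat (dim_row U1) (dim_row A) \<and> U2 \<in> carrier_mat (dim_row U1) (dim_row B) \<and>
     (\<forall>x \<in> carrier_vec (dim_row U1).
        transpose_mat U1 *\<^sub>v x = 0\<^sub>v (dim_row A) \<and> transpose_mat U2 *\<^sub>v x = 0\<^sub>v (dim_row B)
        \<longrightarrow> x = 0\<^sub>v (dim_row U1)) \<and>
     (\<forall>u1 \<in> carrier_vec (dim_row A). \<forall>u2 \<in> carrier_vec (dim_row B).
        transpose_mat A *\<^sub>v u1 = transpose_mat B *\<^sub>v u2 \<longleftrightarrow>
        (\<exists>x \<in> carrier_vec (dim_row U1). u1 = transpose_mat U1 *\<^sub>v x \<and> u2 = transpose_mat U2 *\<^sub>v x))"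

text \<open>(S,V) is a possible output of the join algorithm on (S1,V1),(S2,V2): for some enumeration
  ps of all pairs of coherence classes (C1,C2) (each exactly once) and some valid pushout
  results Us, S, T1, T2 are the row-wise concatenations and V = image(V1,T1) u image(V2,T2).\<close>
definition join_result :: "rat mat \<Rightarrow> qvasr \<Rightarrow> rat mat \<Rightarrow> qvasr \<Rightarrow> rat mat \<Rightarrow> qvasr \<Rightarrow> bool" where
  "join_result S1 V1 S2 V2 S V \<longleftrightarrow>
     (\<exists>ps Us. distinct ps \<and>
        set ps = coh_classes (dim_row S1) V1 \<times> coh_classes (dim_row S2) V2 \<and>
        length Us = length ps \<and>
        (\<forall>k < length ps.
           is_pushout (pi_mat (dim_row S1) (fst (ps ! k)) * S1)
                      (pi_mat (dim_row S2) (snd (ps ! k)) * S2)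
                      (fst (Us ! k)) (snd (Us ! k))) \<and>
        S = mat_of_rows (dim_col S1)
              (concat (map (\<lambda>((C1,C2),(U1,U2)). rows (U1 * pi_mat (dim_row S1) C1 * S1)) (zip ps Us))) \<and>
        V = vasr_image V1 (mat_of_rows (dim_row S1)
              (concat (map (\<lambda>((C1,C2),(U1,U2)). rows (U1 * pi_mat (dim_row S1) C1)) (zip ps Us))))
          \<union> vasr_image V2 (mat_of_rows (dim_row S2)
              (concat (map (\<lambda>((C1,C2),(U1,U2)). rows (U2 * pi_mat (dim_row S2) C2)) (zip ps Us)))))"

end

theory Submission
  imports Defs
begin

definition liftv :: "nat \<Rightarrow> nat set \<Rightarrow> rat vec \<Rightarrow> rat vec" where
  "liftv d C u = vec d (\<lambda>j. \<Sum>c<card C. if sorted_list_of_set C ! c = j then u $ c else 0)"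

lemma sum_sorted_delta:
  assumes "finite C" and "c0 < card C"
  shows "(\<Sum>c<card C. if sorted_list_of_set C ! c = sorted_list_of_set C ! c0 then g c else 0) = (g c0 :: rat)"
proof -
  have d: "distinct (sorted_list_of_set C)" by simp
  have l: "length (sorted_list_of_set C) = card C" using assms by simp
  have "\<And>c. c < card C \<Longrightarrow> (sorted_list_of_set C ! c = sorted_list_of_set C ! c0) = (c = c0)"
    using nth_eq_iff_index_eq[OF d] l assms by auto
  then have "(\<Sum>c<card C. if sorted_list_of_set C ! c = sorted_list_of_set C ! c0 then g c else 0)
     = (\<Sum>c<card C. if c = c0 then g c else 0)" by (intro sum.cong) auto
  also have "\<dots> = g c0" using assms by simp
  finally show ?thesis .
qed

lemma liftv_sorted:
  assumes "finite C" "C \<subseteq> {..<d}" "c < card C"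
  shows "liftv d C u $ (sorted_list_of_set C ! c) = u $ c"
proof -
  have "sorted_list_of_set C ! c \<in> C" using assms by (metis nth_mem sorted_list_of_set(1) length_sorted_list_of_set)
  then have "sorted_list_of_set C ! c < d" using assms by auto
  then show ?thesis unfolding liftv_def using sum_sorted_delta[OF assms(1,3)] by simp
qed

lemma liftv_out:
  assumes "finite C" "j < d" "j \<notin> C"
  shows "liftv d C u $ j = 0"
proof -
  have "\<And>c. c < card C \<Longrightarrow> sorted_list_of_set C ! c \<noteq> j"
    using assms by (metis nth_mem sorted_list_of_set(1) length_sorted_list_of_set)
  then show ?thesis unfolding liftv_def using assms by simp
qed

lemma liftv_dim[simp]: "dim_vec (liftv d C u) = d" "liftv d C u \<in> carrier_vec d"
  unfolding liftv_def by auto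

lemma liftv_supp:
  assumes "finite C" "j < d" "liftv d C u $ j \<noteq> 0" shows "j \<in> C"
  using liftv_out assms by blast

lemma liftv_zero:
  assumes "finite C" "C \<subseteq> {..<d}" "u \<in> carrier_vec (card C)" "liftv d C u = 0\<^sub>v d"
  shows "u = 0\<^sub>v (card C)"
proof (rule eq_vecI)
  fix c assume "c < dim_vec (0\<^sub>v (card C) :: rat vec)"
  then have c: "c < card C" by simp
  have "sorted_list_of_set C ! c \<in> C" using assms c by (metis nth_mem sorted_list_of_set(1) length_sorted_list_of_set)
  then have "sorted_list_of_set C ! c < d" using assms by auto
  then show "u $ c = 0\<^sub>v (card C) $ c" using liftv_sorted[OF assms(1,2) c, of u] assms(4) c by simp
qed (use assms in auto)

lemma liftv_surj:
  assumes "finite C" "C \<subseteq> {..<d}" "w \<in> carrier_vec d" "\<forall>j<d. w $ j \<noteq> 0 \<longrightarrow> j \<in> C"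
  shows "liftv d C (vec (card C) (\<lambda>c. w $ (sorted_list_of_set C ! c))) = w"
proof (rule eq_vecI)
  fix j assume "j < dim_vec w"
  then have j: "j < d" using assms by simp
  show "liftv d C (vec (card C) (\<lambda>c. w $ (sorted_list_of_set C ! c))) $ j = w $ j"
  proof (cases "j \<in> C")
    case True
    then obtain c where c: "c < card C" "sorted_list_of_set C ! c = j"
      using assms by (metis in_set_conv_nth sorted_list_of_set(1) length_sorted_list_of_set)
    then show ?thesis using liftv_sorted[OF assms(1,2) c(1)] by simp
  next
    case False
    then show ?thesis using liftv_out[OF assms(1) j False] assms j by auto
  qed
qed (use assms in auto)

lemma pi_mat_dims[simp]:
  "finite C \<Longrightarrow> dim_row (pi_mat d C) = card C" "dim_col (pi_mat d C) = d"
  unfolding pi_mat_def by auto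

lemma pi_mat_index:
  assumes "finite C" "c < card C" "j < d" "C \<subseteq> {..<d}"
  shows "pi_mat d C $$ (c,j) = (if sorted_list_of_set C ! c = j then 1 else 0)"
proof -
  have "sorted_list_of_set C ! c \<in> C" using assms by (metis nth_mem sorted_list_of_set(1) length_sorted_list_of_set)
  then have "sorted_list_of_set C ! c < d" using assms by auto
  then show ?thesis unfolding pi_mat_def using assms by (subst mat_of_rows_index) auto
qed

lemma U_pi_index:
  assumes "finite C" "C \<subseteq> {..<d}" "U \<in> carrier_mat m (card C)" "l < m" "j < d"
  shows "(U * pi_mat d C) $$ (l,j) = liftv d C (row U l) $ j"
proof -
  have "(U * pi_mat d C) $$ (l,j) = (\<Sum>c<card C. U $$ (l,c) * pi_mat d C $$ (c,j))"
    using assms by (simp add: scalar_prod_def lessThan_atLeast0)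
  also have "\<dots> = (\<Sum>c<card C. if sorted_list_of_set C ! c = j then row U l $ c else 0)"
    using assms by (intro sum.cong) (auto simp: pi_mat_index)
  finally show ?thesis unfolding liftv_def using assms by simp
qed

lemma pi_S_transpose:
  assumes "finite C" "C \<subseteq> {..<d}" "S \<in> carrier_mat d n" "u \<in> carrier_vec (card C)"
  shows "transpose_mat (pi_mat d C * S) *\<^sub>v u = transpose_mat S *\<^sub>v liftv d C u"
proof (rule eq_vecI)
  fix j assume "j < dim_vec (transpose_mat S *\<^sub>v liftv d C u)"
  then have j: "j < n" using assms by simp
  have "(transpose_mat (pi_mat d C * S) *\<^sub>v u) $ j = (\<Sum>c<card C. (\<Sum>i<d. pi_mat d C $$ (c,i) * S $$ (i,j)) * u $ c)"
    using assms j by (simp add: scalar_prod_def lessThan_atLeast0)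
  also have "\<dots> = (\<Sum>i<d. S $$ (i,j) * (\<Sum>c<card C. pi_mat d C $$ (c,i) * u $ c))"
    by (simp add: sum_distrib_left sum_distrib_right sum.swap[of _ "{..<d}"] algebra_simps)
  also have "\<dots> = (\<Sum>i<d. S $$ (i,j) * liftv d C u $ i)"
    using assms by (intro sum.cong refl) (auto simp: liftv_def pi_mat_index intro!: sum.cong)
  also have "\<dots> = (transpose_mat S *\<^sub>v liftv d C u) $ j"
    using assms j by (simp add: scalar_prod_def lessThan_atLeast0)
  finally show "(transpose_mat (pi_mat d C * S) *\<^sub>v u) $ j = (transpose_mat S *\<^sub>v liftv d C u) $ j" .
qed (use assms in auto)

lemma liftv_lin:
  assumes "finite C" "C \<subseteq> {..<d}" "U \<in> carrier_mat m (card C)" "x \<in> carrier_vec m" "j < d"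
  shows "(\<Sum>l<m. x $ l * (U * pi_mat d C) $$ (l,j)) = liftv d C (transpose_mat U *\<^sub>v x) $ j"
proof -
  have "(\<Sum>l<m. x $ l * (U * pi_mat d C) $$ (l,j)) = (\<Sum>l<m. x $ l * liftv d C (row U l) $ j)"
    by (intro sum.cong refl, subst U_pi_index[OF assms(1,2,3) _ assms(5)]) auto
  also have "\<dots> = (\<Sum>c<card C. if sorted_list_of_set C ! c = j then (\<Sum>l<m. U $$ (l,c) * x $ l) else 0)"
    using assms apply (simp add: liftv_def sum_distrib_left if_distrib algebra_simps cong: if_cong)
    by (subst sum.swap) (auto intro!: sum.cong)
  also have "\<dots> = liftv d C (transpose_mat U *\<^sub>v x) $ j"
    using assms by (auto simp: liftv_def scalar_prod_def lessThan_atLeast0 intro!: sum.cong)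
  finally show ?thesis .
qed


lemma pigeon:
  assumes sim: "lin_sim d (qvasr_step V1) M (qvasr_step V')" and fin: "finite V'"
    and M: "M \<in> carrier_mat m d"
    and ra: "(r,a) \<in> V1" "r \<in> carrier_vec d" "a \<in> carrier_vec d" and w: "w \<in> carrier_vec d"
  shows "\<exists>(r',a')\<in>V'. dim_vec r' = m \<and> M *\<^sub>v a = a' \<and>
     M *\<^sub>v vec d (\<lambda>i. r $ i * w $ i) = vec m (\<lambda>i. r' $ i * (M *\<^sub>v w) $ i)"
proof -
  define u where "u t = of_nat t \<cdot>\<^sub>v w" for t :: nat
  define v where "v t = vec d (\<lambda>i. r $ i * u t $ i) + a" for t
  have uc: "u t \<in> carrier_vec d" for t using w by (simp add: u_def)
  have vc: "v t \<in> carrier_vec d" for t using ra by (simp add: v_def)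
  have "qvasr_step V1 (u t) (v t)" for t
    unfolding qvasr_step_def using ra uc by (auto simp: v_def intro!: bexI[of _ "(r,a)"])
  then have st: "qvasr_step V' (M *\<^sub>v u t) (M *\<^sub>v v t)" for t
    using sim uc vc unfolding lin_sim_def by blast
  have "\<forall>t. \<exists>p\<in>V'. dim_vec (M *\<^sub>v u t) = dim_vec (fst p) \<and>
      M *\<^sub>v v t = vec (dim_vec (fst p)) (\<lambda>i. fst p $ i * (M *\<^sub>v u t) $ i) + snd p"
  proof
    fix t
    from st[of t] obtain r0 a0 where "(r0,a0) \<in> V'" "dim_vec (M *\<^sub>v u t) = dim_vec r0"
      "M *\<^sub>v v t = vec (dim_vec r0) (\<lambda>i. r0 $ i * (M *\<^sub>v u t) $ i) + a0"
      unfolding qvasr_step_def by blast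
    then show "\<exists>p\<in>V'. dim_vec (M *\<^sub>v u t) = dim_vec (fst p) \<and>
      M *\<^sub>v v t = vec (dim_vec (fst p)) (\<lambda>i. fst p $ i * (M *\<^sub>v u t) $ i) + snd p"
      by (intro bexI[of _ "(r0,a0)"]) auto
  qed
  then obtain f where f: "\<And>t. f t \<in> V'" "\<And>t. dim_vec (M *\<^sub>v u t) = dim_vec (fst (f t))"
    "\<And>t. M *\<^sub>v v t = vec (dim_vec (fst (f t))) (\<lambda>i. fst (f t) $ i * (M *\<^sub>v u t) $ i) + snd (f t)"
    by metis
  have "\<not> inj f"
  proof
    assume "inj f"
    then have "finite (UNIV :: nat set)"
      using f(1) fin by (metis finite_imageD finite_subset image_subsetI)
    then show False by simp
  qed
  then obtain t1 t2 where t: "t1 \<noteq> t2" "f t1 = f t2" unfolding inj_def by blast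
  obtain r' a' where p: "f t1 = (r',a')" by (cases "f t1")
  have dr: "dim_vec r' = m" using f(2)[of t1] p M by simp
  have da: "dim_vec a' = m" using arg_cong[OF f(3)[of t1], of dim_vec] p M by simp
  define X where "X i = (\<Sum>j<d. M $$ (i,j) * (r $ j * w $ j))" for i
  define Y where "Y i = (\<Sum>j<d. M $$ (i,j) * a $ j)" for i
  define W where "W i = (\<Sum>j<d. M $$ (i,j) * w $ j)" for i
  have eq: "of_nat t * X i + Y i = r' $ i * (of_nat t * W i) + a' $ i"
    if "i < m" "f t = (r',a')" for t i
  proof -
    have "(M *\<^sub>v v t) $ i = (vec m (\<lambda>i. r' $ i * (M *\<^sub>v u t) $ i) + a') $ i"
      using f(3)[of t] that dr by simp
    moreover have "(M *\<^sub>v v t) $ i = of_nat t * X i + Y i"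
      using that M ra w
      by (simp add: v_def u_def scalar_prod_def X_def Y_def lessThan_atLeast0 sum_distrib_left
          sum.distrib[symmetric] algebra_simps)
    moreover have "(M *\<^sub>v u t) $ i = of_nat t * W i"
      using that M w by (simp add: u_def scalar_prod_def W_def lessThan_atLeast0 sum_distrib_left algebra_simps)
    ultimately show ?thesis using that da by simp
  qed
  have XY: "X i = r' $ i * W i \<and> Y i = a' $ i" if "i < m" for i
  proof -
    have e1: "of_nat t1 * X i + Y i = r' $ i * (of_nat t1 * W i) + a' $ i" using eq that p by simp
    have e2: "of_nat t2 * X i + Y i = r' $ i * (of_nat t2 * W i) + a' $ i" using eq that p t by simp
    from e1 e2 have "(of_nat t1 - of_nat t2) * (X i - r' $ i * W i) = (0::rat)" by (simp add: algebra_simps)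
    then have "X i = r' $ i * W i" using t(1) by simp
    then show ?thesis using e1 by (simp add: algebra_simps)
  qed
  show ?thesis
  proof (rule bexI[of _ "(r',a')"], simp, intro conjI)
    show "dim_vec r' = m" by fact
    show "M *\<^sub>v a = a'"
      using XY M ra da by (intro eq_vecI) (auto simp: Y_def scalar_prod_def lessThan_atLeast0)
    show "M *\<^sub>v vec d (\<lambda>i. r $ i * w $ i) = vec m (\<lambda>i. r' $ i * (M *\<^sub>v w) $ i)"
      using XY M ra w by (intro eq_vecI) (auto simp: X_def W_def scalar_prod_def lessThan_atLeast0)
    show "(r',a') \<in> V'" using f(1) p by metis
  qed
qed

lemma generic_list:
  fixes L :: "rat vec list"
  assumes "set L \<subseteq> carrier_vec d" "0\<^sub>v d \<notin> set L"
  shows "\<exists>w\<in>carrier_vec d. \<forall>v\<in>set L. v \<bullet> w \<noteq> 0"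
  using assms
proof (induction L)
  case Nil
  then show ?case by (auto intro: zero_carrier_vec)
next
  case (Cons v L)
  then obtain w where w: "w \<in> carrier_vec d" "\<forall>u\<in>set L. u \<bullet> w \<noteq> 0" by auto
  have v: "v \<in> carrier_vec d" "v \<noteq> 0\<^sub>v d" using Cons.prems by auto
  show ?case
  proof (cases "v \<bullet> w = 0")
    case False
    then show ?thesis using w by auto
  next
    case True
    obtain j where j: "j < d" "v $ j \<noteq> 0"
      using v by (metis eq_vecI carrier_vecD index_zero_vec(1) index_zero_vec(2))
    define Bad where "Bad = insert 0 ((\<lambda>u. - (u \<bullet> w) / (u $ j)) ` set L)"
    have "finite Bad" unfolding Bad_def by simp
    then obtain t :: rat where t: "t \<notin> Bad" using ex_new_if_finite[OF infinite_UNIV_char_0] by blast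
    define w' where "w' = w + t \<cdot>\<^sub>v unit_vec d j"
    have w'c: "w' \<in> carrier_vec d" using w by (simp add: w'_def)
    have sp: "u \<bullet> w' = u \<bullet> w + t * u $ j" if "u \<in> carrier_vec d" for u
      using that w j unfolding w'_def
      by (subst scalar_prod_add_distrib[of _ d]) auto
    show ?thesis
    proof (intro bexI[OF _ w'c] ballI)
      fix u assume "u \<in> set (v # L)"
      then consider "u = v" | "u \<in> set L" by auto
      then show "u \<bullet> w' \<noteq> 0"
      proof cases
        case 1
        then show ?thesis using sp[OF v(1)] True t j unfolding Bad_def by auto
      next
        case 2
        then have uc: "u \<in> carrier_vec d" using Cons.prems by auto
        show ?thesis
        proof (cases "u $ j = 0")
          case True
          then show ?thesis using sp[OF uc] w 2 by auto
        next
          case False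
          show ?thesis
          proof
            assume "u \<bullet> w' = 0"
            then have "t = - (u \<bullet> w) / (u $ j)" using sp[OF uc] False by (simp add: field_simps)
            then show False using t 2 unfolding Bad_def by auto
          qed
        qed
      qed
    qed
  qed
qed

lemma generic_mat:
  fixes M :: "rat mat"
  assumes "M \<in> carrier_mat m d"
  shows "\<exists>w\<in>carrier_vec d. \<forall>i<m. row M i \<noteq> 0\<^sub>v d \<longrightarrow> (M *\<^sub>v w) $ i \<noteq> 0"
proof -
  have "set (filter (\<lambda>v. v \<noteq> 0\<^sub>v d) (rows M)) \<subseteq> carrier_vec d"
    using assms by (auto simp: rows_def)
  from generic_list[OF this] obtain w where w: "w \<in> carrier_vec d"
    "\<forall>v\<in>set (filter (\<lambda>v. v \<noteq> 0\<^sub>v d) (rows M)). v \<bullet> w \<noteq> 0" by auto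
  show ?thesis
  proof (intro bexI[OF _ w(1)] allI impI)
    fix i assume "i < m" "row M i \<noteq> 0\<^sub>v d"
    then have "row M i \<in> set (filter (\<lambda>v. v \<noteq> 0\<^sub>v d) (rows M))" using assms by (auto simp: rows_def)
    then show "(M *\<^sub>v w) $ i \<noteq> 0" using w assms \<open>i < m\<close> by auto
  qed
qed


lemma sim_coh:
  assumes sim: "lin_sim d (qvasr_step V1) M (qvasr_step V')" and q': "qvasr m V'"
    and M: "M \<in> carrier_mat m d"
    and ra: "(r,a) \<in> V1" "r \<in> carrier_vec d" "a \<in> carrier_vec d" and r01: "\<forall>j<d. r $ j = 0 \<or> r $ j = 1"
    and i: "i < m"
  shows "\<exists>\<rho>. \<forall>j<d. M $$ (i,j) \<noteq> 0 \<longrightarrow> r $ j = \<rho>"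
proof -
  have fin: "finite V'" using q' unfolding qvasr_def by auto
  have wc: "row M i \<in> carrier_vec d" using M by auto
  from pigeon[OF sim fin M ra wc] obtain r' a' where p: "(r',a') \<in> V'"
    "M *\<^sub>v vec d (\<lambda>j. r $ j * row M i $ j) = vec m (\<lambda>j. r' $ j * (M *\<^sub>v row M i) $ j)" by auto
  have r'01: "r' $ i = 0 \<or> r' $ i = 1" using q' p(1) i unfolding qvasr_def by auto
  have "(M *\<^sub>v vec d (\<lambda>j. r $ j * row M i $ j)) $ i = (\<Sum>j<d. r $ j * (M $$ (i,j))^2)"
    using M i by (simp add: scalar_prod_def lessThan_atLeast0 power2_eq_square algebra_simps)
  moreover have "(vec m (\<lambda>j. r' $ j * (M *\<^sub>v row M i) $ j)) $ i = r' $ i * (\<Sum>j<d. (M $$ (i,j))^2)"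
    using M i by (simp add: scalar_prod_def lessThan_atLeast0 power2_eq_square algebra_simps)
  ultimately have e: "(\<Sum>j<d. r $ j * (M $$ (i,j))^2) = r' $ i * (\<Sum>j<d. (M $$ (i,j))^2)"
    using p(2) by simp
  show ?thesis
  proof (intro exI[of _ "r' $ i"] allI impI)
    fix j assume j: "j < d" "M $$ (i,j) \<noteq> 0"
    show "r $ j = r' $ i"
    proof (cases "r' $ i = 0")
      case True
      then have "(\<Sum>j<d. r $ j * (M $$ (i,j))^2) = 0" using e by simp
      moreover have "\<forall>j\<in>{..<d}. 0 \<le> r $ j * (M $$ (i,j))^2" using r01 by auto
      ultimately have "r $ j * (M $$ (i,j))^2 = 0" using sum_nonneg_eq_0_iff[of "{..<d}" "\<lambda>j. r $ j * (M $$ (i,j))^2"] j by auto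
      then show ?thesis using j True by simp
    next
      case False
      then have one: "r' $ i = 1" using r'01 by simp
      have "(\<Sum>j<d. (1 - r $ j) * (M $$ (i,j))^2) = (\<Sum>j<d. (M $$ (i,j))^2) - (\<Sum>j<d. r $ j * (M $$ (i,j))^2)"
        by (simp add: sum_subtractf algebra_simps)
      also have "\<dots> = 0" using e one by simp
      finally have "(\<Sum>j<d. (1 - r $ j) * (M $$ (i,j))^2) = 0" .
      moreover have "\<forall>j\<in>{..<d}. 0 \<le> (1 - r $ j) * (M $$ (i,j))^2" using r01 by auto
      ultimately have "(1 - r $ j) * (M $$ (i,j))^2 = 0" using sum_nonneg_eq_0_iff[of "{..<d}" "\<lambda>j. (1 - r $ j) * (M $$ (i,j))^2"] j by auto
      then show ?thesis using j one by simp
    qed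
  qed
qed

lemma sim_B:
  assumes sim: "lin_sim d (qvasr_step V1) M (qvasr_step V')" and q': "qvasr m V'"
    and M: "M \<in> carrier_mat m d"
    and ra: "(r,a) \<in> V1" "r \<in> carrier_vec d" "a \<in> carrier_vec d" and r01: "\<forall>j<d. r $ j = 0 \<or> r $ j = 1"
  shows "\<exists>(r',a')\<in>V'. dim_vec r' = m \<and> M *\<^sub>v a = a' \<and>
     (\<forall>i<m. \<forall>j<d. M $$ (i,j) \<noteq> 0 \<longrightarrow> r' $ i = r $ j)"
proof -
  have fin: "finite V'" using q' unfolding qvasr_def by auto
  obtain w where w: "w \<in> carrier_vec d" "\<forall>i<m. row M i \<noteq> 0\<^sub>v d \<longrightarrow> (M *\<^sub>v w) $ i \<noteq> 0"
    using generic_mat[OF M] by blast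
  from pigeon[OF sim fin M ra w(1)] obtain r' a' where p: "(r',a') \<in> V'" "dim_vec r' = m" "M *\<^sub>v a = a'"
    "M *\<^sub>v vec d (\<lambda>j. r $ j * w $ j) = vec m (\<lambda>j. r' $ j * (M *\<^sub>v w) $ j)" by auto
  show ?thesis
  proof (intro bexI[OF _ p(1)], simp only: split, intro conjI allI impI)
    show "dim_vec r' = m" "M *\<^sub>v a = a'" using p by auto
    fix i j assume ij: "i < m" "j < d" "M $$ (i,j) \<noteq> 0"
    have "row M i \<noteq> 0\<^sub>v d"
    proof
      assume "row M i = 0\<^sub>v d"
      then have "row M i $ j = 0" using ij by simp
      then show False using ij M by simp
    qed
    then have nz: "(M *\<^sub>v w) $ i \<noteq> 0" using w ij by auto
    obtain \<rho> where rho: "\<forall>j<d. M $$ (i,j) \<noteq> 0 \<longrightarrow> r $ j = \<rho>"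
      using sim_coh[OF sim q' M ra r01 ij(1)] by blast
    have "(M *\<^sub>v vec d (\<lambda>j. r $ j * w $ j)) $ i = (\<Sum>j<d. M $$ (i,j) * (r $ j * w $ j))"
      using M ij by (simp add: scalar_prod_def lessThan_atLeast0)
    also have "\<dots> = (\<Sum>j<d. \<rho> * (M $$ (i,j) * w $ j))"
      using rho by (intro sum.cong) auto
    also have "\<dots> = \<rho> * (M *\<^sub>v w) $ i"
      using M ij w by (simp add: scalar_prod_def lessThan_atLeast0 sum_distrib_left)
    finally have A: "(M *\<^sub>v vec d (\<lambda>j. r $ j * w $ j)) $ i = \<rho> * (M *\<^sub>v w) $ i" .
    have B: "(M *\<^sub>v vec d (\<lambda>j. r $ j * w $ j)) $ i = r' $ i * (M *\<^sub>v w) $ i" using p(4) ij by simp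
    from A B have "r' $ i = \<rho>" using nz by (metis mult_cancel_right)
    then show "r' $ i = r $ j" using rho ij by simp
  qed
qed


lemma liftv_0[simp]: "liftv d C (0\<^sub>v (card C)) = 0\<^sub>v d"
  unfolding liftv_def by (intro eq_vecI) (auto intro!: sum.neutral)

locale po_ctx =
  fixes dA dB n :: nat and CA CB :: "nat set" and SA SB UA UB :: "rat mat"
  assumes po: "is_pushout (pi_mat dA CA * SA) (pi_mat dB CB * SB) UA UB"
    and fA: "finite CA" "CA \<subseteq> {..<dA}" and fB: "finite CB" "CB \<subseteq> {..<dB}"
    and SA: "SA \<in> carrier_mat dA n" and SB: "SB \<in> carrier_mat dB n"
begin

lemma dimA[simp]: "dim_row (pi_mat dA CA * SA) = card CA" using fA by simp
lemma dimB[simp]: "dim_row (pi_mat dB CB * SB) = card CB" using fB by simp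

lemma carr0: "UA \<in> carrier_mat (dim_row UA) (dim_row (pi_mat dA CA * SA))"
  by (rule po[unfolded is_pushout_def, THEN conjunct2, THEN conjunct1])
lemma carr1: "UB \<in> carrier_mat (dim_row UA) (dim_row (pi_mat dB CB * SB))"
  by (rule po[unfolded is_pushout_def, THEN conjunct2, THEN conjunct2, THEN conjunct1])
lemma carr: "UA \<in> carrier_mat (dim_row UA) (card CA)" "UB \<in> carrier_mat (dim_row UA) (card CB)"
  using carr0 carr1 by (simp_all only: dimA dimB)

lemma dims: "dim_col UA = card CA" "dim_row UB = dim_row UA" "dim_col UB = card CB"
  using carrier_matD[OF carr(1)] carrier_matD[OF carr(2)] by simp_all

lemma po_iff:
  assumes "u1 \<in> carrier_vec (card CA)" "u2 \<in> carrier_vec (card CB)"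
  shows "(transpose_mat (pi_mat dA CA * SA) *\<^sub>v u1 = transpose_mat (pi_mat dB CB * SB) *\<^sub>v u2) =
    (\<exists>x\<in>carrier_vec (dim_row UA). u1 = transpose_mat UA *\<^sub>v x \<and> u2 = transpose_mat UB *\<^sub>v x)"
proof -
  have P: "\<forall>u1 \<in> carrier_vec (dim_row (pi_mat dA CA * SA)). \<forall>u2 \<in> carrier_vec (dim_row (pi_mat dB CB * SB)).
        transpose_mat (pi_mat dA CA * SA) *\<^sub>v u1 = transpose_mat (pi_mat dB CB * SB) *\<^sub>v u2 \<longleftrightarrow>
        (\<exists>x \<in> carrier_vec (dim_row UA). u1 = transpose_mat UA *\<^sub>v x \<and> u2 = transpose_mat UB *\<^sub>v x)"
    by (rule po[unfolded is_pushout_def, THEN conjunct2, THEN conjunct2, THEN conjunct2, THEN conjunct2])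
  show ?thesis using P[unfolded dimA dimB] assms by blast
qed

lemma po_indep:
  assumes "x \<in> carrier_vec (dim_row UA)" "transpose_mat UA *\<^sub>v x = 0\<^sub>v (card CA)"
    "transpose_mat UB *\<^sub>v x = 0\<^sub>v (card CB)"
  shows "x = 0\<^sub>v (dim_row UA)"
proof -
  have P: "\<forall>x \<in> carrier_vec (dim_row UA).
        transpose_mat UA *\<^sub>v x = 0\<^sub>v (dim_row (pi_mat dA CA * SA)) \<and> transpose_mat UB *\<^sub>v x = 0\<^sub>v (dim_row (pi_mat dB CB * SB))
        \<longrightarrow> x = 0\<^sub>v (dim_row UA)"
    by (rule po[unfolded is_pushout_def, THEN conjunct2, THEN conjunct2, THEN conjunct2, THEN conjunct1])
  show ?thesis using P[unfolded dimA dimB] assms by blast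
qed

lemma po_eq:
  assumes x: "x \<in> carrier_vec (dim_row UA)"
  shows "transpose_mat SA *\<^sub>v liftv dA CA (transpose_mat UA *\<^sub>v x) =
         transpose_mat SB *\<^sub>v liftv dB CB (transpose_mat UB *\<^sub>v x)"
proof -
  have u1: "transpose_mat UA *\<^sub>v x \<in> carrier_vec (card CA)"
    unfolding carrier_vec_def mem_Collect_eq dim_mult_mat_vec index_transpose_mat(2) dims(1) ..
  have u2: "transpose_mat UB *\<^sub>v x \<in> carrier_vec (card CB)"
    unfolding carrier_vec_def mem_Collect_eq dim_mult_mat_vec index_transpose_mat(2) dims(3) ..
  have "transpose_mat (pi_mat dA CA * SA) *\<^sub>v (transpose_mat UA *\<^sub>v x) =
        transpose_mat (pi_mat dB CB * SB) *\<^sub>v (transpose_mat UB *\<^sub>v x)"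
    using po_iff[OF u1 u2] x by blast
  then show ?thesis by (simp only: pi_S_transpose[OF fA SA u1] pi_S_transpose[OF fB SB u2])
qed

lemma po_exists:
  assumes "u1 \<in> carrier_vec (card CA)" "u2 \<in> carrier_vec (card CB)"
    "transpose_mat SA *\<^sub>v liftv dA CA u1 = transpose_mat SB *\<^sub>v liftv dB CB u2"
  shows "\<exists>x\<in>carrier_vec (dim_row UA). u1 = transpose_mat UA *\<^sub>v x \<and> u2 = transpose_mat UB *\<^sub>v x"
proof -
  have "transpose_mat (pi_mat dA CA * SA) *\<^sub>v u1 = transpose_mat (pi_mat dB CB * SB) *\<^sub>v u2"
    unfolding pi_S_transpose[OF fA SA assms(1)] pi_S_transpose[OF fB SB assms(2)] by (rule assms(3))
  then show ?thesis using po_iff[OF assms(1,2)] by blast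
qed

lemma dimUB: "dim_row UB = dim_row UA" by (rule dims(2))

lemma po_sym: "po_ctx dB dA n CB CA SB SA UB UA"
  unfolding po_ctx_def is_pushout_def dimA dimB dimUB
proof (intro conjI ballI impI)
  show "dim_col (pi_mat dB CB * SB) = dim_col (pi_mat dA CA * SA)" using SA SB by simp
  show "UB \<in> carrier_mat (dim_row UA) (card CB)" "UA \<in> carrier_mat (dim_row UA) (card CA)" using carr by blast+
  show "finite CB" "CB \<subseteq> {..<dB}" "finite CA" "CA \<subseteq> {..<dA}" using fA fB by auto
  show "SB \<in> carrier_mat dB n" "SA \<in> carrier_mat dA n" using SA SB by auto
next
  fix x :: "rat vec" assume "x \<in> carrier_vec (dim_row UA)"
    "transpose_mat UB *\<^sub>v x = 0\<^sub>v (card CB) \<and> transpose_mat UA *\<^sub>v x = 0\<^sub>v (card CA)"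
  then show "x = 0\<^sub>v (dim_row UA)" using po_indep by blast
next
  fix u1 u2 :: "rat vec" assume u: "u1 \<in> carrier_vec (card CB)" "u2 \<in> carrier_vec (card CA)"
  show "(transpose_mat (pi_mat dB CB * SB) *\<^sub>v u1 = transpose_mat (pi_mat dA CA * SA) *\<^sub>v u2) =
       (\<exists>x\<in>carrier_vec (dim_row UA). u1 = transpose_mat UB *\<^sub>v x \<and> u2 = transpose_mat UA *\<^sub>v x)"
    using po_iff[OF u(2) u(1)] by auto
qed

lemma unit_transpose: "l < dim_row UA \<Longrightarrow> transpose_mat UA *\<^sub>v unit_vec (dim_row UA) l = row UA l"
  using dims by (intro eq_vecI) auto

lemma row_nz:
  assumes CB: "CB \<in> coh_classes dB VB" and nor: "normal_abs SB VB" and l: "l < dim_row UA"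
  shows "row UA l \<noteq> 0\<^sub>v (card CA)"
proof
  assume z: "row UA l = 0\<^sub>v (card CA)"
  define x :: "rat vec" where "x = unit_vec (dim_row UA) l"
  have xc: "x \<in> carrier_vec (dim_row UA)" by (simp add: x_def)
  have "transpose_mat UA *\<^sub>v x = 0\<^sub>v (card CA)" using unit_transpose[OF l] z x_def by simp
  then have e: "transpose_mat SB *\<^sub>v liftv dB CB (transpose_mat UB *\<^sub>v x) = 0\<^sub>v n"
  proof -
    have "transpose_mat SA *\<^sub>v 0\<^sub>v dA = 0\<^sub>v n" using SA by (intro eq_vecI) (auto simp: scalar_prod_def)
    then show ?thesis using po_eq[OF xc] \<open>transpose_mat UA *\<^sub>v x = 0\<^sub>v (card CA)\<close> by simp
  qed
  have "liftv dB CB (transpose_mat UB *\<^sub>v x) = 0\<^sub>v dB"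
  proof (rule ccontr)
    assume nz: "liftv dB CB (transpose_mat UB *\<^sub>v x) \<noteq> 0\<^sub>v dB"
    have "coherent_row dB VB (liftv dB CB (transpose_mat UB *\<^sub>v x))"
      unfolding coherent_row_def using CB liftv_supp[OF fB(1)] by blast
    then show False using nor nz e SB unfolding normal_abs_def by auto
  qed
  then have "transpose_mat UB *\<^sub>v x = 0\<^sub>v (card CB)"
  proof -
    have u2c: "transpose_mat UB *\<^sub>v x \<in> carrier_vec (card CB)"
      unfolding carrier_vec_def mem_Collect_eq dim_mult_mat_vec index_transpose_mat(2) dims(3) ..
    show ?thesis by (rule liftv_zero[OF fB u2c]) fact
  qed
  then have "x = 0\<^sub>v (dim_row UA)" using po_indep xc \<open>transpose_mat UA *\<^sub>v x = 0\<^sub>v (card CA)\<close> by auto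
  then have "x $ l = 0" using l by simp
  then show False using l by (simp add: x_def)
qed

end

lemma ub_sim:
  assumes T: "T \<in> carrier_mat N d" and q: "qvasr d V1"
    and rows: "\<forall>i<N. \<exists>j<d. T $$ (i,j) \<noteq> 0"
    and coh: "\<forall>i<N. \<forall>j<d. \<forall>j'<d. T $$ (i,j) \<noteq> 0 \<longrightarrow> T $$ (i,j') \<noteq> 0 \<longrightarrow> coherent_dims V1 j j'"
    and sub: "vasr_image V1 T \<subseteq> V"
  shows "lin_sim d (qvasr_step V1) T (qvasr_step V)"
  unfolding lin_sim_def
proof (intro conjI allI impI)
  show "dim_col T = d" using T by simp
  fix u v assume u: "u \<in> carrier_vec d" and v: "v \<in> carrier_vec d" and st: "qvasr_step V1 u v"
  from st obtain r a where ra: "(r,a) \<in> V1" "dim_vec u = dim_vec r" "v = vec (dim_vec r) (\<lambda>i. r $ i * u $ i) + a"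
    unfolding qvasr_step_def by blast
  have rc: "r \<in> carrier_vec d" and ac: "a \<in> carrier_vec d" using q ra unfolding qvasr_def by auto
  define js where "js i = (SOME j. j < d \<and> T $$ (i,j) \<noteq> 0)" for i
  have js: "js i < d \<and> T $$ (i, js i) \<noteq> 0" if "i < N" for i
    using someI_ex[OF rows[rule_format, OF that]] unfolding js_def by blast
  define r'' where "r'' = vec N (\<lambda>i. r $ js i)"
  have mem: "(r'', T *\<^sub>v a) \<in> V"
    using sub ra T unfolding vasr_image_def r''_def js_def by auto
  have eq: "T *\<^sub>v v = vec (dim_vec r'') (\<lambda>i. r'' $ i * (T *\<^sub>v u) $ i) + T *\<^sub>v a"
  proof -
    have "T *\<^sub>v v = T *\<^sub>v vec d (\<lambda>i. r $ i * u $ i) + T *\<^sub>v a"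
      using ra rc ac T by (simp add: mult_add_distrib_mat_vec[OF T])
    moreover have "T *\<^sub>v vec d (\<lambda>i. r $ i * u $ i) = vec N (\<lambda>i. r'' $ i * (T *\<^sub>v u) $ i)"
    proof (rule eq_vecI)
      fix i assume "i < dim_vec (vec N (\<lambda>i. r'' $ i * (T *\<^sub>v u) $ i))"
      then have i: "i < N" by simp
      have "(T *\<^sub>v vec d (\<lambda>i. r $ i * u $ i)) $ i = (\<Sum>j<d. T $$ (i,j) * (r $ j * u $ j))"
        using T i by (simp add: scalar_prod_def lessThan_atLeast0)
      also have "\<dots> = (\<Sum>j<d. r $ js i * (T $$ (i,j) * u $ j))"
      proof (intro sum.cong refl)
        fix j assume j: "j \<in> {..<d}"
        show "T $$ (i,j) * (r $ j * u $ j) = r $ js i * (T $$ (i,j) * u $ j)"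
        proof (cases "T $$ (i,j) = 0")
          case False
          then have "coherent_dims V1 j (js i)" using coh js[OF i] i j by auto
          then have "r $ j = r $ js i" using ra(1) unfolding coherent_dims_def by auto
          then show ?thesis by simp
        qed simp
      qed
      also have "\<dots> = r'' $ i * (T *\<^sub>v u) $ i"
        using T i u by (simp add: r''_def scalar_prod_def lessThan_atLeast0 sum_distrib_left)
      finally show "(T *\<^sub>v vec d (\<lambda>i. r $ i * u $ i)) $ i = vec N (\<lambda>i. r'' $ i * (T *\<^sub>v u) $ i) $ i"
        using i by simp
    qed (use T in auto)
    ultimately show ?thesis by (simp add: r''_def)
  qed
  show "qvasr_step V (T *\<^sub>v u) (T *\<^sub>v v)"
    unfolding qvasr_step_def using mem eq T by (intro bexI[OF _ mem]) (auto simp: r''_def)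
qed

lemma image_qvasr:
  assumes T: "T \<in> carrier_mat N d" and q: "qvasr d V1"
    and rows: "\<forall>i<N. \<exists>j<d. T $$ (i,j) \<noteq> 0"
  shows "qvasr N (vasr_image V1 T)"
proof -
  have fin: "finite V1" using q unfolding qvasr_def by auto
  have "vasr_image V1 T = (\<lambda>(r,a). (vec (dim_row T) (\<lambda>i. r $ (SOME j. j < dim_col T \<and> T $$ (i,j) \<noteq> 0)),
                      T *\<^sub>v a)) ` V1"
    unfolding vasr_image_def by auto
  then have "finite (vasr_image V1 T)" using fin by simp
  moreover have "r'' \<in> carrier_vec N \<and> a'' \<in> carrier_vec N \<and> (\<forall>i<N. r'' $ i = 0 \<or> r'' $ i = 1)"
    if "(r'',a'') \<in> vasr_image V1 T" for r'' a''
  proof -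
    from that obtain r a where ra: "(r,a) \<in> V1"
      "r'' = vec (dim_row T) (\<lambda>i. r $ (SOME j. j < dim_col T \<and> T $$ (i,j) \<noteq> 0))" "a'' = T *\<^sub>v a"
      unfolding vasr_image_def by blast
    have "r'' $ i = 0 \<or> r'' $ i = 1" if i: "i < N" for i
    proof -
      have "(SOME j. j < d \<and> T $$ (i,j) \<noteq> 0) < d"
        using someI_ex[OF rows[rule_format, OF i]] by blast
      then show ?thesis using q ra T i unfolding qvasr_def by auto
    qed
    moreover have "a'' \<in> carrier_vec N" using ra T by (intro carrier_vecI) simp
    moreover have "r'' \<in> carrier_vec N" using ra T by simp
    ultimately show ?thesis by blast
  qed
  ultimately show ?thesis unfolding qvasr_def
  proof (intro conjI ballI)
    fix p assume "p \<in> vasr_image V1 T"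
    moreover obtain r'' a'' where "p = (r'',a'')" by (cases p)
    ultimately show "case p of (r, a) \<Rightarrow> r \<in> carrier_vec N \<and> a \<in> carrier_vec N \<and> (\<forall>i<N. r $ i = 0 \<or> r $ i = 1)"
      using \<open>\<And>r'' a''. (r'', a'') \<in> vasr_image V1 T \<Longrightarrow> _\<close> by simp
  qed
qed


lemma class_fin: "C \<in> coh_classes d V \<Longrightarrow> finite C \<and> C \<subseteq> {..<d}"
  unfolding coh_classes_def by auto

lemma class_coh: "C \<in> coh_classes d V \<Longrightarrow> j \<in> C \<Longrightarrow> j' \<in> C \<Longrightarrow> coherent_dims V j j'"
  unfolding coh_classes_def coherent_dims_def by fastforce

lemma class_of: "j < d \<Longrightarrow> {j'. j' < d \<and> coherent_dims V j j'} \<in> coh_classes d V"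
  unfolding coh_classes_def by auto

lemma coh_refl: "coherent_dims V j j" unfolding coherent_dims_def by auto

lemma class_eq:
  assumes "C \<in> coh_classes d V" "C' \<in> coh_classes d V" "j \<in> C" "j' \<in> C'" "coherent_dims V j j'"
  shows "C = C'"
  using assms unfolding coh_classes_def coherent_dims_def by fastforce

lemma normal_use:
  assumes "normal_abs S V" "C \<in> coh_classes (dim_row S) V" "w \<in> carrier_vec (dim_row S)"
    "\<forall>j<dim_row S. w $ j \<noteq> 0 \<longrightarrow> j \<in> C" "transpose_mat S *\<^sub>v w = 0\<^sub>v (dim_col S)"
  shows "w = 0\<^sub>v (dim_row S)"
  using assms unfolding normal_abs_def coherent_row_def by blast

lemma row_mult_transpose:
  fixes A B :: "rat mat"
  assumes "A \<in> carrier_mat m d" "B \<in> carrier_mat d n" "i < m"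
  shows "row (A * B) i = transpose_mat B *\<^sub>v row A i"
proof (rule eq_vecI)
  fix j assume "j < dim_vec (transpose_mat B *\<^sub>v row A i)"
  then have j: "j < n" using assms by simp
  have "row (A * B) i $ j = row A i \<bullet> col B j" using assms j by simp
  also have "\<dots> = col B j \<bullet> row A i" using assms by (intro comm_scalar_prod[where n=d]) auto
  also have "\<dots> = (transpose_mat B *\<^sub>v row A i) $ j" using assms j by simp
  finally show "row (A * B) i $ j = (transpose_mat B *\<^sub>v row A i) $ j" .
qed (use assms in simp)

lemma UPS_index:
  assumes "finite C" "C \<subseteq> {..<d}" "U \<in> carrier_mat m (card C)" "S \<in> carrier_mat d n" "l < m" "j < n"
  shows "(U * pi_mat d C * S) $$ (l,j) = (transpose_mat S *\<^sub>v liftv d C (row U l)) $ j"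
proof -
  have "(U * pi_mat d C * S) $$ (l,j) = (\<Sum>c<d. (U * pi_mat d C) $$ (l,c) * S $$ (c,j))"
    using assms by (simp add: scalar_prod_def lessThan_atLeast0)
  also have "\<dots> = (\<Sum>c<d. liftv d C (row U l) $ c * S $$ (c,j))"
    by (intro sum.cong refl, subst U_pi_index[OF assms(1,2,3,5)]) auto
  also have "\<dots> = (transpose_mat S *\<^sub>v liftv d C (row U l)) $ j"
    using assms by (simp add: scalar_prod_def lessThan_atLeast0 mult.commute)
  finally show ?thesis .
qed

lemma qvasr_union: "qvasr N A \<Longrightarrow> qvasr N B \<Longrightarrow> qvasr N (A \<union> B)"
  unfolding qvasr_def by auto

locale jctx =
  fixes n :: nat and S1 S2 :: "rat mat" and V1 V2 :: qvasr
    and ps :: "(nat set \<times> nat set) list" and Us :: "(rat mat \<times> rat mat) list"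
  assumes abs1: "is_abs n S1 V1" and abs2: "is_abs n S2 V2"
    and nor1: "normal_abs S1 V1" and nor2: "normal_abs S2 V2"
    and dist: "distinct ps"
    and setps: "set ps = coh_classes (dim_row S1) V1 \<times> coh_classes (dim_row S2) V2"
    and lenUs: "length Us = length ps"
    and pos: "\<forall>k<length ps. is_pushout (pi_mat (dim_row S1) (fst (ps ! k)) * S1)
                      (pi_mat (dim_row S2) (snd (ps ! k)) * S2) (fst (Us ! k)) (snd (Us ! k))"
begin

abbreviation "d1 \<equiv> dim_row S1"
abbreviation "d2 \<equiv> dim_row S2"
abbreviation "K \<equiv> length ps"
abbreviation "C1 k \<equiv> fst (ps ! k)"
abbreviation "C2 k \<equiv> snd (ps ! k)"
abbreviation "U1 k \<equiv> fst (Us ! k)"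
abbreviation "U2 k \<equiv> snd (Us ! k)"
abbreviation "m k \<equiv> dim_row (fst (Us ! k))"

definition "I = concat (map (\<lambda>k. map (\<lambda>l. (k,l)) [0..<m k]) [0..<K])"
abbreviation "N \<equiv> length I"
definition "Sj = mat_of_rows n (map (\<lambda>(k,l). row (U1 k * pi_mat d1 (C1 k) * S1) l) I)"
definition "T1 = mat_of_rows d1 (map (\<lambda>(k,l). row (U1 k * pi_mat d1 (C1 k)) l) I)"
definition "T2 = mat_of_rows d2 (map (\<lambda>(k,l). row (U2 k * pi_mat d2 (C2 k)) l) I)"
definition "Vj = vasr_image V1 T1 \<union> vasr_image V2 T2"

lemma S1c: "S1 \<in> carrier_mat d1 n" using abs1 unfolding is_abs_def by auto
lemma S2c: "S2 \<in> carrier_mat d2 n" using abs2 unfolding is_abs_def by auto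
lemma q1: "qvasr d1 V1" using abs1 unfolding is_abs_def by auto
lemma q2: "qvasr d2 V2" using abs2 unfolding is_abs_def by auto

lemma cls: "k < K \<Longrightarrow> C1 k \<in> coh_classes d1 V1 \<and> C2 k \<in> coh_classes d2 V2"
  using setps nth_mem[of k ps] by (cases "ps ! k") auto

lemma fin1: "k < K \<Longrightarrow> finite (C1 k)" "k < K \<Longrightarrow> C1 k \<subseteq> {..<d1}"
  using cls class_fin by blast+
lemma fin2: "k < K \<Longrightarrow> finite (C2 k)" "k < K \<Longrightarrow> C2 k \<subseteq> {..<d2}"
  using cls class_fin by blast+

lemma blk: "k < K \<Longrightarrow> po_ctx d1 d2 n (C1 k) (C2 k) S1 S2 (U1 k) (U2 k)"
  unfolding po_ctx_def using pos fin1 fin2 S1c S2c by blast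

lemma U1c: "k < K \<Longrightarrow> U1 k \<in> carrier_mat (m k) (card (C1 k))"
  using po_ctx.carr(1)[OF blk] by blast
lemma U2c: "k < K \<Longrightarrow> U2 k \<in> carrier_mat (m k) (card (C2 k))"
  using po_ctx.carr(2)[OF blk] by blast

lemma set_I: "set I = {(k,l). k < K \<and> l < m k}"
  unfolding I_def by auto

lemma dist_I: "distinct I"
proof -
  have "distinct (concat (map (\<lambda>k. map (Pair k) (g k)) xs))" if "distinct xs" "\<forall>k. distinct (g k)" for xs :: "nat list" and g :: "nat \<Rightarrow> nat list"
    using that by (induction xs) (auto simp: distinct_map inj_on_def)
  then show ?thesis unfolding I_def by simp
qed

lemma I_nth: "i < N \<Longrightarrow> fst (I ! i) < K \<and> snd (I ! i) < m (fst (I ! i))"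
  using nth_mem[of i I] set_I by auto

lemma key_sum:
  assumes k0: "k0 < K"
  shows "(\<Sum>i<N. if fst (I ! i) = k0 then f (snd (I ! i)) else (0::rat)) = (\<Sum>l<m k0. f l)"
proof -
  let ?g = "\<lambda>p. if fst p = k0 then f (snd p) else (0::rat)"
  have "(\<Sum>i<N. ?g (I ! i)) = sum_list (map ?g I)"
    by (simp add: sum_list_sum_nth lessThan_atLeast0)
  also have "\<dots> = sum ?g (set I)" using dist_I by (simp add: sum_list_distinct_conv_sum_set)
  also have "\<dots> = sum ?g (Pair k0 ` {..<m k0})"
    using k0 by (intro sum.mono_neutral_right) (simp, auto simp: set_I)
  also have "\<dots> = (\<Sum>l<m k0. f l)" by (subst sum.reindex) (auto simp: inj_on_def)
  finally show ?thesis by simp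
qed

lemma conv:
  assumes "\<forall>k<K. dim_row (F (C1 k) (C2 k) (U1 k) (U2 k)) = m k"
  shows "concat (map (\<lambda>((C1,C2),(U1,U2)). rows (F C1 C2 U1 U2)) (zip ps Us)) =
         map (\<lambda>(k,l). row (F (C1 k) (C2 k) (U1 k) (U2 k)) l) I"
proof -
  have z: "zip ps Us = map (\<lambda>k. (ps ! k, Us ! k)) [0..<K]"
    using lenUs by (intro nth_equalityI) auto
  have "map (\<lambda>((C1,C2),(U1,U2)). rows (F C1 C2 U1 U2)) (zip ps Us) =
        map (\<lambda>k. map (\<lambda>l. row (F (C1 k) (C2 k) (U1 k) (U2 k)) l) [0..<m k]) [0..<K]"
    unfolding z using assms by (auto simp: split_beta rows_def)
  then show ?thesis unfolding I_def by (simp add: map_concat o_def)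
qed

end


context jctx begin

lemma T1c: "T1 \<in> carrier_mat N d1" unfolding T1_def by (intro carrier_matI) simp_all
lemma T2c: "T2 \<in> carrier_mat N d2" unfolding T2_def by (intro carrier_matI) simp_all
lemma Sjc: "Sj \<in> carrier_mat N n" unfolding Sj_def by (intro carrier_matI) simp_all

lemma dimsT: "dim_row T1 = N" "dim_col T1 = d1" "dim_row T2 = N" "dim_col T2 = d2"
  "dim_row Sj = N" "dim_col Sj = n" "dim_col S1 = n" "dim_col S2 = n"
  using carrier_matD[OF T1c] carrier_matD[OF T2c] carrier_matD[OF Sjc] carrier_matD[OF S1c] carrier_matD[OF S2c]
  by auto

lemma T1_idx:
  assumes "i < N" "j < d1"
  shows "T1 $$ (i,j) = (U1 (fst (I!i)) * pi_mat d1 (C1 (fst (I!i)))) $$ (snd (I!i), j)"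
  using assms I_nth[OF assms(1)] fin1 unfolding T1_def by (simp add: mat_of_rows_index split_beta)

lemma T2_idx:
  assumes "i < N" "j < d2"
  shows "T2 $$ (i,j) = (U2 (fst (I!i)) * pi_mat d2 (C2 (fst (I!i)))) $$ (snd (I!i), j)"
proof -
  have "dim_row (U2 (fst (I!i))) = m (fst (I!i))" using carrier_matD(1)[OF U2c] I_nth[OF assms(1)] by blast
  then show ?thesis
    using assms I_nth[OF assms(1)] fin2 unfolding T2_def by (simp add: mat_of_rows_index split_beta)
qed

lemma T1_idx':
  assumes "i < N" "j < d1"
  shows "T1 $$ (i,j) = liftv d1 (C1 (fst (I!i))) (row (U1 (fst (I!i))) (snd (I!i))) $ j"
  unfolding T1_idx[OF assms] using I_nth[OF assms(1)] assms
  by (intro U_pi_index fin1) (auto intro: U1c)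

lemma T2_idx':
  assumes "i < N" "j < d2"
  shows "T2 $$ (i,j) = liftv d2 (C2 (fst (I!i))) (row (U2 (fst (I!i))) (snd (I!i))) $ j"
  unfolding T2_idx[OF assms] using I_nth[OF assms(1)] assms
  by (intro U_pi_index fin2) (auto intro: U2c)

lemma rowT1: "i < N \<Longrightarrow> row T1 i = liftv d1 (C1 (fst (I!i))) (row (U1 (fst (I!i))) (snd (I!i)))"
  by (intro eq_vecI) (auto simp: T1_idx' dimsT)

lemma rowT2: "i < N \<Longrightarrow> row T2 i = liftv d2 (C2 (fst (I!i))) (row (U2 (fst (I!i))) (snd (I!i)))"
  by (intro eq_vecI) (auto simp: T2_idx' dimsT)

lemma Sj_idx:
  assumes "i < N" "j < n"
  shows "Sj $$ (i,j) = (transpose_mat S1 *\<^sub>v liftv d1 (C1 (fst (I!i))) (row (U1 (fst (I!i))) (snd (I!i)))) $ j"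
proof -
  have "Sj $$ (i,j) = (U1 (fst (I!i)) * pi_mat d1 (C1 (fst (I!i))) * S1) $$ (snd (I!i), j)"
    using assms I_nth[OF assms(1)] fin1 unfolding Sj_def by (simp add: mat_of_rows_index split_beta dimsT)
  also have "\<dots> = (transpose_mat S1 *\<^sub>v liftv d1 (C1 (fst (I!i))) (row (U1 (fst (I!i))) (snd (I!i)))) $ j"
    using I_nth[OF assms(1)] assms by (intro UPS_index fin1) (auto intro: U1c S1c)
  finally show ?thesis .
qed

lemma Sj_row2:
  assumes "k < K" "l < m k"
  shows "transpose_mat S1 *\<^sub>v liftv d1 (C1 k) (row (U1 k) l) = transpose_mat S2 *\<^sub>v liftv d2 (C2 k) (row (U2 k) l)"
proof -
  interpret P: po_ctx d1 d2 n "C1 k" "C2 k" S1 S2 "U1 k" "U2 k" using blk[OF assms(1)] .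
  interpret Q: po_ctx d2 d1 n "C2 k" "C1 k" S2 S1 "U2 k" "U1 k" using P.po_sym .
  have x: "unit_vec (m k) l \<in> carrier_vec (m k)" by simp
  have "transpose_mat (U2 k) *\<^sub>v unit_vec (m k) l = row (U2 k) l"
    using Q.unit_transpose[of l] P.dimUB assms by simp
  then show ?thesis using P.po_eq[OF x] P.unit_transpose[OF assms(2)] by simp
qed

lemma T1S: "T1 * S1 = Sj"
proof (rule eq_matI)
  fix i j assume ij: "i < dim_row Sj" "j < dim_col Sj"
  then have i: "i < N" and j: "j < n" by (simp_all add: dimsT)
  have "(T1 * S1) $$ (i,j) = row (T1 * S1) i $ j" using i j by (simp add: dimsT)
  also have "\<dots> = (transpose_mat S1 *\<^sub>v row T1 i) $ j" using row_mult_transpose[OF T1c S1c i] by simp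
  also have "\<dots> = Sj $$ (i,j)" using Sj_idx[OF i j] rowT1[OF i] by simp
  finally show "(T1 * S1) $$ (i,j) = Sj $$ (i,j)" .
qed (simp_all add: dimsT)

lemma T2S: "T2 * S2 = Sj"
proof (rule eq_matI)
  fix i j assume ij: "i < dim_row Sj" "j < dim_col Sj"
  then have i: "i < N" and j: "j < n" by (simp_all add: dimsT)
  have "(T2 * S2) $$ (i,j) = row (T2 * S2) i $ j" using i j by (simp add: dimsT)
  also have "\<dots> = (transpose_mat S2 *\<^sub>v row T2 i) $ j" using row_mult_transpose[OF T2c S2c i] by simp
  also have "\<dots> = Sj $$ (i,j)" using Sj_idx[OF i j] rowT2[OF i] Sj_row2 I_nth[OF i] by simp
  finally show "(T2 * S2) $$ (i,j) = Sj $$ (i,j)" .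
qed (simp_all add: dimsT)

lemma nz_vec:
  fixes v :: "rat vec"
  assumes "v \<in> carrier_vec d" "v \<noteq> 0\<^sub>v d" shows "\<exists>c<d. v $ c \<noteq> 0"
  using assms by (metis eq_vecI carrier_vecD index_zero_vec(1) index_zero_vec(2))

lemma T1_rows: "\<forall>i<N. \<exists>j<d1. T1 $$ (i,j) \<noteq> 0"
proof (intro allI impI)
  fix i assume i: "i < N"
  let ?k = "fst (I!i)" and ?l = "snd (I!i)"
  have kl: "?k < K" "?l < m ?k" using I_nth[OF i] by auto
  interpret P: po_ctx d1 d2 n "C1 ?k" "C2 ?k" S1 S2 "U1 ?k" "U2 ?k" using blk[OF kl(1)] .
  have "row (U1 ?k) ?l \<noteq> 0\<^sub>v (card (C1 ?k))" using P.row_nz[OF _ nor2 kl(2)] cls[OF kl(1)] by blast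
  moreover have "row (U1 ?k) ?l \<in> carrier_vec (card (C1 ?k))" using carrier_matD(2)[OF U1c[OF kl(1)]] by (intro carrier_vecI) simp
  ultimately obtain c where c: "c < card (C1 ?k)" "row (U1 ?k) ?l $ c \<noteq> 0" using nz_vec by blast
  let ?j = "sorted_list_of_set (C1 ?k) ! c"
  have "?j \<in> C1 ?k" using c fin1[OF kl(1)]
    by (metis nth_mem sorted_list_of_set(1) length_sorted_list_of_set)
  then have j: "?j < d1" using fin1[OF kl(1)] by auto
  have "T1 $$ (i, ?j) = row (U1 ?k) ?l $ c"
    unfolding T1_idx'[OF i j] by (rule liftv_sorted[OF fin1(1)[OF kl(1)] fin1(2)[OF kl(1)] c(1)])
  then show "\<exists>j<d1. T1 $$ (i,j) \<noteq> 0" using j c by auto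
qed

lemma T2_rows: "\<forall>i<N. \<exists>j<d2. T2 $$ (i,j) \<noteq> 0"
proof (intro allI impI)
  fix i assume i: "i < N"
  let ?k = "fst (I!i)" and ?l = "snd (I!i)"
  have kl: "?k < K" "?l < m ?k" using I_nth[OF i] by auto
  interpret P: po_ctx d1 d2 n "C1 ?k" "C2 ?k" S1 S2 "U1 ?k" "U2 ?k" using blk[OF kl(1)] .
  interpret Q: po_ctx d2 d1 n "C2 ?k" "C1 ?k" S2 S1 "U2 ?k" "U1 ?k" using P.po_sym .
  have l2: "?l < dim_row (U2 ?k)" using kl P.dimUB by simp
  have "row (U2 ?k) ?l \<noteq> 0\<^sub>v (card (C2 ?k))" using Q.row_nz[OF _ nor1 l2] cls[OF kl(1)] by blast
  moreover have "row (U2 ?k) ?l \<in> carrier_vec (card (C2 ?k))" using carrier_matD(2)[OF U2c[OF kl(1)]] by (intro carrier_vecI) simp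
  ultimately obtain c where c: "c < card (C2 ?k)" "row (U2 ?k) ?l $ c \<noteq> 0" using nz_vec by blast
  let ?j = "sorted_list_of_set (C2 ?k) ! c"
  have "?j \<in> C2 ?k" using c fin2[OF kl(1)]
    by (metis nth_mem sorted_list_of_set(1) length_sorted_list_of_set)
  then have j: "?j < d2" using fin2[OF kl(1)] by auto
  have "T2 $$ (i, ?j) = row (U2 ?k) ?l $ c"
    unfolding T2_idx'[OF i j] by (rule liftv_sorted[OF fin2(1)[OF kl(1)] fin2(2)[OF kl(1)] c(1)])
  then show "\<exists>j<d2. T2 $$ (i,j) \<noteq> 0" using j c by auto
qed

lemma T1_supp: "i < N \<Longrightarrow> j < d1 \<Longrightarrow> T1 $$ (i,j) \<noteq> 0 \<Longrightarrow> j \<in> C1 (fst (I!i))"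
  using T1_idx' liftv_supp fin1 I_nth by metis
lemma T2_supp: "i < N \<Longrightarrow> j < d2 \<Longrightarrow> T2 $$ (i,j) \<noteq> 0 \<Longrightarrow> j \<in> C2 (fst (I!i))"
  using T2_idx' liftv_supp fin2 I_nth by metis

lemma T1_coh: "\<forall>i<N. \<forall>j<d1. \<forall>j'<d1. T1 $$ (i,j) \<noteq> 0 \<longrightarrow> T1 $$ (i,j') \<noteq> 0 \<longrightarrow> coherent_dims V1 j j'"
  using T1_supp class_coh cls I_nth by meson
lemma T2_coh: "\<forall>i<N. \<forall>j<d2. \<forall>j'<d2. T2 $$ (i,j) \<noteq> 0 \<longrightarrow> T2 $$ (i,j') \<noteq> 0 \<longrightarrow> coherent_dims V2 j j'"
  using T2_supp class_coh cls I_nth by meson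

lemma qVj: "qvasr N Vj"
  unfolding Vj_def by (intro qvasr_union image_qvasr[OF T1c q1 T1_rows] image_qvasr[OF T2c q2 T2_rows])

lemma absj: "is_abs n Sj Vj"
  unfolding is_abs_def using Sjc qVj by simp

lemma ub1: "abs_le (S1,V1) (Sj,Vj)"
  unfolding abs_le_def prod.case
proof (rule bexI[of _ T1])
  have "vasr_image V1 T1 \<subseteq> Vj" unfolding Vj_def by blast
  then show "lin_sim d1 (qvasr_step V1) T1 (qvasr_step Vj) \<and> T1 * S1 = Sj"
    using ub_sim[OF T1c q1 T1_rows T1_coh] T1S by blast
  show "T1 \<in> carrier_mat (dim_row Sj) d1" unfolding dimsT by (rule T1c)
qed

lemma ub2: "abs_le (S2,V2) (Sj,Vj)"
  unfolding abs_le_def prod.case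
proof (rule bexI[of _ T2])
  have "vasr_image V2 T2 \<subseteq> Vj" unfolding Vj_def by blast
  then show "lin_sim d2 (qvasr_step V2) T2 (qvasr_step Vj) \<and> T2 * S2 = Sj"
    using ub_sim[OF T2c q2 T2_rows T2_coh] T2S by blast
  show "T2 \<in> carrier_mat (dim_row Sj) d2" unfolding dimsT by (rule T2c)
qed

end


context jctx begin

lemma Tz_gen:
  assumes Tc: "T \<in> carrier_mat N d" and k0: "k0 < K" and x: "x \<in> carrier_vec (m k0)"
    and z: "z \<in> carrier_vec N"
    and zI: "\<forall>i<N. z $ i = (if fst (I!i) = k0 then x $ snd (I!i) else 0)"
    and Tidx: "\<forall>i<N. \<forall>j<d. fst (I!i) = k0 \<longrightarrow> T $$ (i,j) = (U * pi_mat d C) $$ (snd (I!i), j)"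
    and U: "U \<in> carrier_mat (m k0) (card C)" and C: "finite C" "C \<subseteq> {..<d}"
  shows "transpose_mat T *\<^sub>v z = liftv d C (transpose_mat U *\<^sub>v x)"
proof (rule eq_vecI)
  have dT: "dim_row T = N" "dim_col T = d" using carrier_matD[OF Tc] by auto
  have dz: "dim_vec z = N" using carrier_vecD[OF z] .
  fix j assume "j < dim_vec (liftv d C (transpose_mat U *\<^sub>v x))"
  then have j: "j < d" by simp
  have "(transpose_mat T *\<^sub>v z) $ j = (\<Sum>i<N. T $$ (i,j) * z $ i)"
    using j dT dz by (simp add: scalar_prod_def lessThan_atLeast0)
  also have "\<dots> = (\<Sum>i<N. if fst (I!i) = k0 then x $ snd (I!i) * (U * pi_mat d C) $$ (snd (I!i), j) else 0)"
  proof (intro sum.cong refl)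
    fix i assume "i \<in> {..<N}"
    then have i: "i < N" by simp
    show "T $$ (i,j) * z $ i = (if fst (I!i) = k0 then x $ snd (I!i) * (U * pi_mat d C) $$ (snd (I!i), j) else 0)"
      using zI[rule_format, OF i] Tidx[rule_format, OF i j] by (cases "fst (I!i) = k0") (simp_all add: mult.commute)
  qed
  also have "\<dots> = (\<Sum>l<m k0. x $ l * (U * pi_mat d C) $$ (l, j))"
    by (rule key_sum[OF k0])
  also have "\<dots> = liftv d C (transpose_mat U *\<^sub>v x) $ j"
    by (rule liftv_lin[OF C U x j])
  finally show "(transpose_mat T *\<^sub>v z) $ j = liftv d C (transpose_mat U *\<^sub>v x) $ j" .
qed (use Tc in simp)

definition "js1 i = (SOME j. j < d1 \<and> T1 $$ (i,j) \<noteq> 0)"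
definition "js2 i = (SOME j. j < d2 \<and> T2 $$ (i,j) \<noteq> 0)"

lemma js1: "i < N \<Longrightarrow> js1 i < d1 \<and> T1 $$ (i, js1 i) \<noteq> 0"
  using someI_ex[OF T1_rows[rule_format]] unfolding js1_def by blast
lemma js2: "i < N \<Longrightarrow> js2 i < d2 \<and> T2 $$ (i, js2 i) \<noteq> 0"
  using someI_ex[OF T2_rows[rule_format]] unfolding js2_def by blast

lemma Vj_el1: "(r,a) \<in> V1 \<Longrightarrow> (vec N (\<lambda>i. r $ js1 i), T1 *\<^sub>v a) \<in> Vj"
  unfolding Vj_def vasr_image_def dimsT js1_def by blast
lemma Vj_el2: "(r,a) \<in> V2 \<Longrightarrow> (vec N (\<lambda>i. r $ js2 i), T2 *\<^sub>v a) \<in> Vj"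
  unfolding Vj_def vasr_image_def dimsT js2_def by blast

lemma same_block:
  assumes i: "i < N" and i': "i' < N" and c: "coherent_dims Vj i i'"
  shows "fst (I!i) = fst (I!i')"
proof -
  let ?k = "fst (I!i)" and ?k' = "fst (I!i')"
  have k: "?k < K" "?k' < K" using I_nth i i' by auto
  have c1: "coherent_dims V1 (js1 i) (js1 i')"
    unfolding coherent_dims_def
  proof (clarify)
    fix r a assume "(r,a) \<in> V1"
    from Vj_el1[OF this] c have "vec N (\<lambda>i. r $ js1 i) $ i = vec N (\<lambda>i. r $ js1 i) $ i'"
      unfolding coherent_dims_def by fastforce
    then show "r $ js1 i = r $ js1 i'" using i i' by simp
  qed
  have c2: "coherent_dims V2 (js2 i) (js2 i')"
    unfolding coherent_dims_def
  proof (clarify)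
    fix r a assume "(r,a) \<in> V2"
    from Vj_el2[OF this] c have "vec N (\<lambda>i. r $ js2 i) $ i = vec N (\<lambda>i. r $ js2 i) $ i'"
      unfolding coherent_dims_def by fastforce
    then show "r $ js2 i = r $ js2 i'" using i i' by simp
  qed
  have "C1 ?k = C1 ?k'"
    using class_eq[OF conjunct1[OF cls[OF k(1)]] conjunct1[OF cls[OF k(2)]]
      T1_supp[OF i conjunct1[OF js1[OF i]] conjunct2[OF js1[OF i]]]
      T1_supp[OF i' conjunct1[OF js1[OF i']] conjunct2[OF js1[OF i']]] c1] .
  moreover have "C2 ?k = C2 ?k'"
    using class_eq[OF conjunct2[OF cls[OF k(1)]] conjunct2[OF cls[OF k(2)]]
      T2_supp[OF i conjunct1[OF js2[OF i]] conjunct2[OF js2[OF i]]]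
      T2_supp[OF i' conjunct1[OF js2[OF i']] conjunct2[OF js2[OF i']]] c2] .
  ultimately have "ps ! ?k = ps ! ?k'" by (simp add: prod_eq_iff)
  then show ?thesis using nth_eq_iff_index_eq[OF dist k] by simp
qed

lemma normal_Sj: "normal_abs Sj Vj"
  unfolding normal_abs_def dimsT
proof
  assume "\<exists>z\<in>carrier_vec N. z \<noteq> 0\<^sub>v N \<and> coherent_row N Vj z \<and> transpose_mat Sj *\<^sub>v z = 0\<^sub>v n"
  then obtain z where z: "z \<in> carrier_vec N" "z \<noteq> 0\<^sub>v N" "coherent_row N Vj z" "transpose_mat Sj *\<^sub>v z = 0\<^sub>v n"
    by blast
  obtain D where D: "D \<in> coh_classes N Vj" "\<forall>j<N. z $ j \<noteq> 0 \<longrightarrow> j \<in> D"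
    using z(3) unfolding coherent_row_def by blast
  obtain i0 where i0: "i0 < N" "z $ i0 \<noteq> 0" using nz_vec[OF z(1,2)] by blast
  define k0 where "k0 = fst (I!i0)"
  have k0: "k0 < K" using I_nth[OF i0(1)] k0_def by simp
  have blk0: "fst (I!i) = k0" if "i < N" "z $ i \<noteq> 0" for i
    using same_block[OF i0(1) that(1) class_coh[OF D(1)]] D(2) i0 that k0_def by auto
  define idx where "idx p = the_inv_into {..<N} (\<lambda>i. I ! i) p" for p
  have inj: "inj_on (\<lambda>i. I ! i) {..<N}" using inj_on_nth[OF dist_I] by auto
  define x where "x = vec (m k0) (\<lambda>l. z $ idx (k0,l))"
  have xc: "x \<in> carrier_vec (m k0)" unfolding x_def by simp
  have zI: "\<forall>i<N. z $ i = (if fst (I!i) = k0 then x $ snd (I!i) else 0)"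
  proof (intro allI impI)
    fix i assume i: "i < N"
    show "z $ i = (if fst (I!i) = k0 then x $ snd (I!i) else 0)"
    proof (cases "fst (I!i) = k0")
      case True
      then have "I ! i = (k0, snd (I!i))" by (simp add: prod_eq_iff)
      then have "idx (k0, snd (I!i)) = i" unfolding idx_def using the_inv_into_f_f[OF inj] i
        by (metis lessThan_iff)
      moreover have "snd (I!i) < m k0" using I_nth[OF i] True by simp
      ultimately show ?thesis using True by (simp add: x_def)
    next
      case False
      then show ?thesis using blk0[OF i] by auto
    qed
  qed
  interpret P: po_ctx d1 d2 n "C1 k0" "C2 k0" S1 S2 "U1 k0" "U2 k0" using blk[OF k0] .
  have w1: "transpose_mat T1 *\<^sub>v z = liftv d1 (C1 k0) (transpose_mat (U1 k0) *\<^sub>v x)"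
    by (rule Tz_gen[OF T1c k0 xc z(1) zI _ U1c[OF k0] fin1(1)[OF k0] fin1(2)[OF k0]])
      (use T1_idx in auto)
  have w2: "transpose_mat T2 *\<^sub>v z = liftv d2 (C2 k0) (transpose_mat (U2 k0) *\<^sub>v x)"
    by (rule Tz_gen[OF T2c k0 xc z(1) zI _ U2c[OF k0] fin2(1)[OF k0] fin2(2)[OF k0]])
      (use T2_idx in auto)
  have e1: "transpose_mat S1 *\<^sub>v (transpose_mat T1 *\<^sub>v z) = 0\<^sub>v n"
  proof -
    have "transpose_mat Sj = transpose_mat S1 * transpose_mat T1"
      using transpose_mult[OF T1c S1c] T1S by simp
    then have "transpose_mat Sj *\<^sub>v z = transpose_mat S1 *\<^sub>v (transpose_mat T1 *\<^sub>v z)"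
      using assoc_mult_mat_vec[OF transpose_carrier_mat[THEN iffD2, OF S1c] transpose_carrier_mat[THEN iffD2, OF T1c] z(1)] by simp
    then show ?thesis using z(4) by simp
  qed
  have e2: "transpose_mat S2 *\<^sub>v (transpose_mat T2 *\<^sub>v z) = 0\<^sub>v n"
  proof -
    have "transpose_mat Sj = transpose_mat S2 * transpose_mat T2"
      using transpose_mult[OF T2c S2c] T2S by simp
    then have "transpose_mat Sj *\<^sub>v z = transpose_mat S2 *\<^sub>v (transpose_mat T2 *\<^sub>v z)"
      using assoc_mult_mat_vec[OF transpose_carrier_mat[THEN iffD2, OF S2c] transpose_carrier_mat[THEN iffD2, OF T2c] z(1)] by simp
    then show ?thesis using z(4) by simp
  qed
  have u1c: "transpose_mat (U1 k0) *\<^sub>v x \<in> carrier_vec (card (C1 k0))"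
    using carrier_matD[OF U1c[OF k0]] by (intro carrier_vecI) simp
  have u2c: "transpose_mat (U2 k0) *\<^sub>v x \<in> carrier_vec (card (C2 k0))"
    using carrier_matD[OF U2c[OF k0]] by (intro carrier_vecI) simp
  have "liftv d1 (C1 k0) (transpose_mat (U1 k0) *\<^sub>v x) = 0\<^sub>v d1"
    by (rule normal_use[OF nor1 conjunct1[OF cls[OF k0]]])
      (use e1 w1 liftv_supp[OF fin1(1)[OF k0]] dimsT in auto)
  then have a1: "transpose_mat (U1 k0) *\<^sub>v x = 0\<^sub>v (card (C1 k0))"
    by (rule liftv_zero[OF fin1(1)[OF k0] fin1(2)[OF k0] u1c])
  have "liftv d2 (C2 k0) (transpose_mat (U2 k0) *\<^sub>v x) = 0\<^sub>v d2"
    by (rule normal_use[OF nor2 conjunct2[OF cls[OF k0]]])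
      (use e2 w2 liftv_supp[OF fin2(1)[OF k0]] dimsT in auto)
  then have a2: "transpose_mat (U2 k0) *\<^sub>v x = 0\<^sub>v (card (C2 k0))"
    by (rule liftv_zero[OF fin2(1)[OF k0] fin2(2)[OF k0] u2c])
  have "x = 0\<^sub>v (m k0)" by (rule P.po_indep[OF xc a1 a2])
  then have "z $ i0 = 0" using zI i0 k0_def I_nth[OF i0(1)] by simp
  then show False using i0 by simp
qed

end


lemma mat_zero_vec: "A \<in> carrier_mat nr nc \<Longrightarrow> A *\<^sub>v 0\<^sub>v nc = (0\<^sub>v nr :: rat vec)"
  by (intro eq_vecI) (auto simp: scalar_prod_def)

lemma lub_sim:
  fixes T Tc R :: "rat mat"
  assumes Tc': "T \<in> carrier_mat m' N" and Tcc: "Tc \<in> carrier_mat N d" and TR: "T * Tc = R"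
    and ra: "(r,a) \<in> V1" and ac: "a \<in> carrier_vec d"
    and Bp: "\<exists>(r',a')\<in>V'. dim_vec r' = m' \<and> R *\<^sub>v a = a' \<and> (\<forall>i<m'. \<forall>j<d. R $$ (i,j) \<noteq> 0 \<longrightarrow> r' $ i = r $ j)"
    and link: "\<forall>i<m'. \<forall>i2<N. T $$ (i,i2) \<noteq> 0 \<longrightarrow>
                 (\<exists>j<d. R $$ (i,j) \<noteq> 0 \<and> (\<forall>j'<d. Tc $$ (i2,j') \<noteq> 0 \<longrightarrow> coherent_dims V1 j j'))"
    and rows: "\<forall>i2<N. \<exists>j<d. Tc $$ (i2,j) \<noteq> 0"
    and u: "u \<in> carrier_vec N"
  shows "qvasr_step V' (T *\<^sub>v u)
     (T *\<^sub>v (vec N (\<lambda>i2. r $ (SOME j. j < d \<and> Tc $$ (i2,j) \<noteq> 0) * u $ i2) + Tc *\<^sub>v a))"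
proof -
  define js where "js i2 = (SOME j. j < d \<and> Tc $$ (i2,j) \<noteq> 0)" for i2
  have js: "js i2 < d \<and> Tc $$ (i2, js i2) \<noteq> 0" if "i2 < N" for i2
    using someI_ex[OF rows[rule_format, OF that]] unfolding js_def by blast
  obtain r' a' where p: "(r',a') \<in> V'" "dim_vec r' = m'" "R *\<^sub>v a = a'"
    "\<forall>i<m'. \<forall>j<d. R $$ (i,j) \<noteq> 0 \<longrightarrow> r' $ i = r $ j" using Bp by blast
  have dT: "dim_row T = m'" "dim_col T = N" using carrier_matD[OF Tc'] by auto
  have dTc: "dim_row Tc = N" "dim_col Tc = d" using carrier_matD[OF Tcc] by auto
  have vc: "vec N (\<lambda>i2. r $ js i2 * u $ i2) \<in> carrier_vec N" by simp
  have tca: "Tc *\<^sub>v a \<in> carrier_vec N" using dTc by (intro carrier_vecI) simp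
  have "T *\<^sub>v (vec N (\<lambda>i2. r $ js i2 * u $ i2) + Tc *\<^sub>v a) =
        T *\<^sub>v vec N (\<lambda>i2. r $ js i2 * u $ i2) + T *\<^sub>v (Tc *\<^sub>v a)"
    by (rule mult_add_distrib_mat_vec[OF Tc' vc tca])
  also have "T *\<^sub>v (Tc *\<^sub>v a) = a'"
    using assoc_mult_mat_vec[OF Tc' Tcc ac] TR p(3) by simp
  also have "T *\<^sub>v vec N (\<lambda>i2. r $ js i2 * u $ i2) = vec m' (\<lambda>i. r' $ i * (T *\<^sub>v u) $ i)"
  proof (rule eq_vecI)
    fix i assume "i < dim_vec (vec m' (\<lambda>i. r' $ i * (T *\<^sub>v u) $ i))"
    then have i: "i < m'" by simp
    have "(T *\<^sub>v vec N (\<lambda>i2. r $ js i2 * u $ i2)) $ i = (\<Sum>i2<N. T $$ (i,i2) * (r $ js i2 * u $ i2))"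
      using i dT by (simp add: scalar_prod_def lessThan_atLeast0)
    also have "\<dots> = (\<Sum>i2<N. r' $ i * (T $$ (i,i2) * u $ i2))"
    proof (intro sum.cong refl)
      fix i2 assume "i2 \<in> {..<N}"
      then have i2: "i2 < N" by simp
      show "T $$ (i,i2) * (r $ js i2 * u $ i2) = r' $ i * (T $$ (i,i2) * u $ i2)"
      proof (cases "T $$ (i,i2) = 0")
        case False
        then obtain j where j: "j < d" "R $$ (i,j) \<noteq> 0" "\<forall>j'<d. Tc $$ (i2,j') \<noteq> 0 \<longrightarrow> coherent_dims V1 j j'"
          using link i i2 by blast
        have "r' $ i = r $ j" using p(4) i j by blast
        moreover have "coherent_dims V1 j (js i2)" using j(3) js[OF i2] by blast
        then have "r $ j = r $ js i2" using ra unfolding coherent_dims_def by fastforce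
        ultimately show ?thesis by simp
      qed simp
    qed
    also have "\<dots> = r' $ i * (T *\<^sub>v u) $ i"
      using i dT u by (simp add: scalar_prod_def lessThan_atLeast0 sum_distrib_left)
    finally show "(T *\<^sub>v vec N (\<lambda>i2. r $ js i2 * u $ i2)) $ i = vec m' (\<lambda>i. r' $ i * (T *\<^sub>v u) $ i) $ i"
      using i by simp
  qed (use dT in simp)
  finally have e: "T *\<^sub>v (vec N (\<lambda>i2. r $ js i2 * u $ i2) + Tc *\<^sub>v a) = vec (dim_vec r') (\<lambda>i. r' $ i * (T *\<^sub>v u) $ i) + a'"
    using p(2) by simp
  show ?thesis unfolding qvasr_step_def js_def[symmetric]
    using p(1,2) e dT by (intro bexI[OF _ p(1)]) simp
qed

locale lubctx = jctx +
  fixes S' :: "rat mat" and V' :: qvasr and R1 R2 :: "rat mat"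
  assumes q': "qvasr (dim_row S') V'"
    and R1c: "R1 \<in> carrier_mat (dim_row S') (dim_row S1)"
    and R2c: "R2 \<in> carrier_mat (dim_row S') (dim_row S2)"
    and sim1: "lin_sim (dim_row S1) (qvasr_step V1) R1 (qvasr_step V')"
    and sim2: "lin_sim (dim_row S2) (qvasr_step V2) R2 (qvasr_step V')"
    and R1S: "R1 * S1 = S'" and R2S: "R2 * S2 = S'"
begin

abbreviation "m' \<equiv> dim_row S'"

lemma dR: "dim_row R1 = m'" "dim_col R1 = d1" "dim_row R2 = m'" "dim_col R2 = d2"
  using carrier_matD[OF R1c] carrier_matD[OF R2c] by auto

lemma V1el: "(r,a) \<in> V1 \<Longrightarrow> r \<in> carrier_vec d1 \<and> a \<in> carrier_vec d1 \<and> (\<forall>j<d1. r $ j = 0 \<or> r $ j = 1)"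
  using q1 unfolding qvasr_def by blast
lemma V2el: "(r,a) \<in> V2 \<Longrightarrow> r \<in> carrier_vec d2 \<and> a \<in> carrier_vec d2 \<and> (\<forall>j<d2. r $ j = 0 \<or> r $ j = 1)"
  using q2 unfolding qvasr_def by blast

lemma R1coh: "i < m' \<Longrightarrow> j < d1 \<Longrightarrow> j' < d1 \<Longrightarrow> R1 $$ (i,j) \<noteq> 0 \<Longrightarrow> R1 $$ (i,j') \<noteq> 0 \<Longrightarrow> coherent_dims V1 j j'"
  unfolding coherent_dims_def
proof (clarify)
  fix r a assume "i < m'" "j < d1" "j' < d1" "R1 $$ (i,j) \<noteq> 0" "R1 $$ (i,j') \<noteq> 0" "(r,a) \<in> V1"
  then show "r $ j = r $ j'"
    using sim_coh[OF sim1 q' R1c \<open>(r,a) \<in> V1\<close>] V1el[OF \<open>(r,a) \<in> V1\<close>] by metis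
qed

lemma R2coh: "i < m' \<Longrightarrow> j < d2 \<Longrightarrow> j' < d2 \<Longrightarrow> R2 $$ (i,j) \<noteq> 0 \<Longrightarrow> R2 $$ (i,j') \<noteq> 0 \<Longrightarrow> coherent_dims V2 j j'"
  unfolding coherent_dims_def
proof (clarify)
  fix r a assume "i < m'" "j < d2" "j' < d2" "R2 $$ (i,j) \<noteq> 0" "R2 $$ (i,j') \<noteq> 0" "(r,a) \<in> V2"
  then show "r $ j = r $ j'"
    using sim_coh[OF sim2 q' R2c \<open>(r,a) \<in> V2\<close>] V2el[OF \<open>(r,a) \<in> V2\<close>] by metis
qed

lemma R1B: "(r,a) \<in> V1 \<Longrightarrow> \<exists>(r',a')\<in>V'. dim_vec r' = m' \<and> R1 *\<^sub>v a = a' \<and>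
     (\<forall>i<m'. \<forall>j<d1. R1 $$ (i,j) \<noteq> 0 \<longrightarrow> r' $ i = r $ j)"
  using sim_B[OF sim1 q' R1c] V1el by blast
lemma R2B: "(r,a) \<in> V2 \<Longrightarrow> \<exists>(r',a')\<in>V'. dim_vec r' = m' \<and> R2 *\<^sub>v a = a' \<and>
     (\<forall>i<m'. \<forall>j<d2. R2 $$ (i,j) \<noteq> 0 \<longrightarrow> r' $ i = r $ j)"
  using sim_B[OF sim2 q' R2c] V2el by blast

lemma rowS': "i < m' \<Longrightarrow> transpose_mat S1 *\<^sub>v row R1 i = transpose_mat S2 *\<^sub>v row R2 i"
  using row_mult_transpose[OF R1c S1c] row_mult_transpose[OF R2c S2c] R1S R2S by metis

lemma R1_class: assumes "i < m'" "row R1 i \<noteq> 0\<^sub>v d1"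
  shows "\<exists>C\<in>coh_classes d1 V1. \<forall>j<d1. R1 $$ (i,j) \<noteq> 0 \<longrightarrow> j \<in> C"
proof -
  have rc: "row R1 i \<in> carrier_vec d1" using dR by (intro carrier_vecI) simp
  obtain j0 where j0: "j0 < d1" "row R1 i $ j0 \<noteq> 0" using nz_vec[OF rc assms(2)] by blast
  then have "R1 $$ (i,j0) \<noteq> 0" using assms dR by simp
  then have "\<forall>j<d1. R1 $$ (i,j) \<noteq> 0 \<longrightarrow> j \<in> {j. j < d1 \<and> coherent_dims V1 j0 j}"
    using R1coh[OF assms(1) j0(1)] by blast
  then show ?thesis using class_of[OF j0(1), of V1] by blast
qed

lemma R2_class: assumes "i < m'" "row R2 i \<noteq> 0\<^sub>v d2"
  shows "\<exists>C\<in>coh_classes d2 V2. \<forall>j<d2. R2 $$ (i,j) \<noteq> 0 \<longrightarrow> j \<in> C"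
proof -
  have rc: "row R2 i \<in> carrier_vec d2" using dR by (intro carrier_vecI) simp
  obtain j0 where j0: "j0 < d2" "row R2 i $ j0 \<noteq> 0" using nz_vec[OF rc assms(2)] by blast
  then have "R2 $$ (i,j0) \<noteq> 0" using assms dR by simp
  then have "\<forall>j<d2. R2 $$ (i,j) \<noteq> 0 \<longrightarrow> j \<in> {j. j < d2 \<and> coherent_dims V2 j0 j}"
    using R2coh[OF assms(1) j0(1)] by blast
  then show ?thesis using class_of[OF j0(1), of V2] by blast
qed

lemma R_zero: assumes i: "i < m'" shows "row R1 i = 0\<^sub>v d1 \<longleftrightarrow> row R2 i = 0\<^sub>v d2"
proof
  assume z: "row R1 i = 0\<^sub>v d1"
  show "row R2 i = 0\<^sub>v d2"
  proof (rule ccontr)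
    assume nz: "row R2 i \<noteq> 0\<^sub>v d2"
    obtain C where C: "C \<in> coh_classes d2 V2" "\<forall>j<d2. R2 $$ (i,j) \<noteq> 0 \<longrightarrow> j \<in> C"
      using R2_class[OF i nz] by blast
    have "transpose_mat S2 *\<^sub>v row R2 i = 0\<^sub>v n"
      using rowS'[OF i] z mat_zero_vec[OF transpose_carrier_mat[THEN iffD2, OF S1c]] by simp
    then have "row R2 i = 0\<^sub>v d2"
      by (intro normal_use[OF nor2 C(1)]) (use C(2) dR i dimsT in \<open>auto intro: carrier_vecI\<close>)
    then show False using nz by simp
  qed
next
  assume z: "row R2 i = 0\<^sub>v d2"
  show "row R1 i = 0\<^sub>v d1"
  proof (rule ccontr)
    assume nz: "row R1 i \<noteq> 0\<^sub>v d1"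
    obtain C where C: "C \<in> coh_classes d1 V1" "\<forall>j<d1. R1 $$ (i,j) \<noteq> 0 \<longrightarrow> j \<in> C"
      using R1_class[OF i nz] by blast
    have "transpose_mat S1 *\<^sub>v row R1 i = 0\<^sub>v n"
      using rowS'[OF i] z mat_zero_vec[OF transpose_carrier_mat[THEN iffD2, OF S2c]] by simp
    then have "row R1 i = 0\<^sub>v d1"
      by (intro normal_use[OF nor1 C(1)]) (use C(2) dR i dimsT in \<open>auto intro: carrier_vecI\<close>)
    then show False using nz by simp
  qed
qed

end


lemma mat_eq_rows:
  fixes A B :: "rat mat"
  assumes "A \<in> carrier_mat nr nc" "B \<in> carrier_mat nr nc" "\<forall>i<nr. row A i = row B i"
  shows "A = B"
proof (rule eq_matI)
  fix i j assume "i < dim_row B" "j < dim_col B"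
  then have ij: "i < nr" "j < nc" using carrier_matD[OF assms(2)] by auto
  have "A $$ (i,j) = row A i $ j" using ij carrier_matD[OF assms(1)] by simp
  also have "\<dots> = row B i $ j" using assms(3) ij by simp
  also have "\<dots> = B $$ (i,j)" using ij carrier_matD[OF assms(2)] by simp
  finally show "A $$ (i,j) = B $$ (i,j)" .
qed (use carrier_matD[OF assms(1)] carrier_matD[OF assms(2)] in auto)

context lubctx begin

definition "Pp i p \<longleftrightarrow> fst p < K \<and> snd p \<in> carrier_vec (m (fst p)) \<and>
   row R1 i = liftv d1 (C1 (fst p)) (transpose_mat (U1 (fst p)) *\<^sub>v snd p) \<and>
   row R2 i = liftv d2 (C2 (fst p)) (transpose_mat (U2 (fst p)) *\<^sub>v snd p)"

lemma P_ex:
  assumes i: "i < m'" "row R1 i \<noteq> 0\<^sub>v d1"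
  shows "\<exists>p. Pp i p"
proof -
  have nz2: "row R2 i \<noteq> 0\<^sub>v d2" using R_zero[OF i(1)] i(2) by simp
  obtain Ca where Ca: "Ca \<in> coh_classes d1 V1" "\<forall>j<d1. R1 $$ (i,j) \<noteq> 0 \<longrightarrow> j \<in> Ca"
    using R1_class[OF i] by blast
  obtain Cb where Cb: "Cb \<in> coh_classes d2 V2" "\<forall>j<d2. R2 $$ (i,j) \<noteq> 0 \<longrightarrow> j \<in> Cb"
    using R2_class[OF i(1) nz2] by blast
  have "(Ca,Cb) \<in> set ps" using setps Ca(1) Cb(1) by simp
  then obtain k where k: "k < K" "ps ! k = (Ca,Cb)" by (metis in_set_conv_nth)
  then have C1k: "C1 k = Ca" and C2k: "C2 k = Cb" by simp_all
  have fa: "finite Ca" "Ca \<subseteq> {..<d1}" using class_fin[OF Ca(1)] by auto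
  have fb: "finite Cb" "Cb \<subseteq> {..<d2}" using class_fin[OF Cb(1)] by auto
  have r1c: "row R1 i \<in> carrier_vec d1" using dR by (intro carrier_vecI) simp
  have r2c: "row R2 i \<in> carrier_vec d2" using dR by (intro carrier_vecI) simp
  have s1: "\<forall>j<d1. row R1 i $ j \<noteq> 0 \<longrightarrow> j \<in> Ca" using Ca(2) dR i by simp
  have s2: "\<forall>j<d2. row R2 i $ j \<noteq> 0 \<longrightarrow> j \<in> Cb" using Cb(2) dR i by simp
  define u1 where "u1 = vec (card Ca) (\<lambda>c. row R1 i $ (sorted_list_of_set Ca ! c))"
  define u2 where "u2 = vec (card Cb) (\<lambda>c. row R2 i $ (sorted_list_of_set Cb ! c))"
  have lu1: "liftv d1 Ca u1 = row R1 i" unfolding u1_def by (rule liftv_surj[OF fa r1c s1])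
  have lu2: "liftv d2 Cb u2 = row R2 i" unfolding u2_def by (rule liftv_surj[OF fb r2c s2])
  have u1c: "u1 \<in> carrier_vec (card (C1 k))" unfolding u1_def C1k by simp
  have u2c: "u2 \<in> carrier_vec (card (C2 k))" unfolding u2_def C2k by simp
  have eq: "transpose_mat S1 *\<^sub>v liftv d1 (C1 k) u1 = transpose_mat S2 *\<^sub>v liftv d2 (C2 k) u2"
    unfolding C1k C2k lu1 lu2 by (rule rowS'[OF i(1)])
  obtain x where x: "x \<in> carrier_vec (m k)" "u1 = transpose_mat (U1 k) *\<^sub>v x" "u2 = transpose_mat (U2 k) *\<^sub>v x"
    using po_ctx.po_exists[OF blk[OF k(1)] u1c u2c eq] by blast
  have "Pp i (k,x)" unfolding Pp_def using k(1) x lu1 lu2 C1k C2k by simp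
  then show ?thesis by blast
qed

definition "kk i = fst (SOME p. Pp i p)"
definition "xx i = snd (SOME p. Pp i p)"

lemma Pkk: "i < m' \<Longrightarrow> row R1 i \<noteq> 0\<^sub>v d1 \<Longrightarrow> Pp i (kk i, xx i)"
  using someI_ex[OF P_ex] unfolding kk_def xx_def by simp

definition "Tl = mat m' N (\<lambda>(i,i2). if row R1 i \<noteq> 0\<^sub>v d1 \<and> fst (I!i2) = kk i then xx i $ snd (I!i2) else 0)"

lemma Tlc: "Tl \<in> carrier_mat m' N" unfolding Tl_def by simp
lemma dTl: "dim_row Tl = m'" "dim_col Tl = N" unfolding Tl_def by simp_all

lemma rowTl: "i < m' \<Longrightarrow> row Tl i = vec N (\<lambda>i2. if row R1 i \<noteq> 0\<^sub>v d1 \<and> fst (I!i2) = kk i then xx i $ snd (I!i2) else 0)"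
  by (intro eq_vecI) (simp_all add: Tl_def)

lemma TT1: "Tl * T1 = R1"
proof (rule mat_eq_rows[of _ m' d1])
  show "Tl * T1 \<in> carrier_mat m' d1" using Tlc T1c by simp
  show "R1 \<in> carrier_mat m' d1" by (rule R1c)
  show "\<forall>i<m'. row (Tl * T1) i = row R1 i"
  proof (intro allI impI)
    fix i assume i: "i < m'"
    have "row (Tl * T1) i = transpose_mat T1 *\<^sub>v row Tl i" by (rule row_mult_transpose[OF Tlc T1c i])
    also have "\<dots> = row R1 i"
    proof (cases "row R1 i = 0\<^sub>v d1")
      case True
      then have "row Tl i = 0\<^sub>v N" using rowTl[OF i] by (intro eq_vecI) auto
      then show ?thesis using True mat_zero_vec[OF transpose_carrier_mat[THEN iffD2, OF T1c]] by simp
    next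
      case False
      note P = Pkk[OF i False, unfolded Pp_def fst_conv snd_conv]
      have zc: "row Tl i \<in> carrier_vec N" using dTl by (intro carrier_vecI) simp
      have zI: "\<forall>i2<N. row Tl i $ i2 = (if fst (I!i2) = kk i then xx i $ snd (I!i2) else 0)"
        using rowTl[OF i] False by simp
      have "transpose_mat T1 *\<^sub>v row Tl i = liftv d1 (C1 (kk i)) (transpose_mat (U1 (kk i)) *\<^sub>v xx i)"
        by (rule Tz_gen[OF T1c conjunct1[OF P] conjunct1[OF conjunct2[OF P]] zc zI _ U1c[OF conjunct1[OF P]]
              fin1(1)[OF conjunct1[OF P]] fin1(2)[OF conjunct1[OF P]]])
          (use T1_idx in auto)
      then show ?thesis using P by simp
    qed
    finally show "row (Tl * T1) i = row R1 i" .
  qed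
qed

lemma TT2: "Tl * T2 = R2"
proof (rule mat_eq_rows[of _ m' d2])
  show "Tl * T2 \<in> carrier_mat m' d2" using Tlc T2c by simp
  show "R2 \<in> carrier_mat m' d2" by (rule R2c)
  show "\<forall>i<m'. row (Tl * T2) i = row R2 i"
  proof (intro allI impI)
    fix i assume i: "i < m'"
    have "row (Tl * T2) i = transpose_mat T2 *\<^sub>v row Tl i" by (rule row_mult_transpose[OF Tlc T2c i])
    also have "\<dots> = row R2 i"
    proof (cases "row R1 i = 0\<^sub>v d1")
      case True
      then have "row Tl i = 0\<^sub>v N" using rowTl[OF i] by (intro eq_vecI) auto
      moreover have "row R2 i = 0\<^sub>v d2" using R_zero[OF i] True by simp
      ultimately show ?thesis using mat_zero_vec[OF transpose_carrier_mat[THEN iffD2, OF T2c]] by simp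
    next
      case False
      note P = Pkk[OF i False, unfolded Pp_def fst_conv snd_conv]
      have zc: "row Tl i \<in> carrier_vec N" using dTl by (intro carrier_vecI) simp
      have zI: "\<forall>i2<N. row Tl i $ i2 = (if fst (I!i2) = kk i then xx i $ snd (I!i2) else 0)"
        using rowTl[OF i] False by simp
      have "transpose_mat T2 *\<^sub>v row Tl i = liftv d2 (C2 (kk i)) (transpose_mat (U2 (kk i)) *\<^sub>v xx i)"
        by (rule Tz_gen[OF T2c conjunct1[OF P] conjunct1[OF conjunct2[OF P]] zc zI _ U2c[OF conjunct1[OF P]]
              fin2(1)[OF conjunct1[OF P]] fin2(2)[OF conjunct1[OF P]]])
          (use T2_idx in auto)
      then show ?thesis using P by simp
    qed
    finally show "row (Tl * T2) i = row R2 i" .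
  qed
qed

lemma TlS: "Tl * Sj = S'"
proof -
  have "Tl * Sj = Tl * (T1 * S1)" using T1S by simp
  also have "\<dots> = (Tl * T1) * S1" using assoc_mult_mat[OF Tlc T1c S1c] by simp
  also have "\<dots> = S'" using TT1 R1S by simp
  finally show ?thesis .
qed

lemma Tl_nz: "i < m' \<Longrightarrow> i2 < N \<Longrightarrow> Tl $$ (i,i2) \<noteq> 0 \<Longrightarrow> row R1 i \<noteq> 0\<^sub>v d1 \<and> fst (I!i2) = kk i"
  unfolding Tl_def by (auto split: if_splits)

lemma link1: "\<forall>i<m'. \<forall>i2<N. Tl $$ (i,i2) \<noteq> 0 \<longrightarrow>
   (\<exists>j<d1. R1 $$ (i,j) \<noteq> 0 \<and> (\<forall>j'<d1. T1 $$ (i2,j') \<noteq> 0 \<longrightarrow> coherent_dims V1 j j'))"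
proof (intro allI impI)
  fix i i2 assume i: "i < m'" and i2: "i2 < N" and nz: "Tl $$ (i,i2) \<noteq> 0"
  note t = Tl_nz[OF i i2 nz]
  note P = Pkk[OF i conjunct1[OF t], unfolded Pp_def fst_conv snd_conv]
  have r1c: "row R1 i \<in> carrier_vec d1" using dR by (intro carrier_vecI) simp
  obtain j0 where j0: "j0 < d1" "row R1 i $ j0 \<noteq> 0" using nz_vec[OF r1c conjunct1[OF t]] by blast
  have Rj0: "R1 $$ (i,j0) \<noteq> 0" using j0 i dR by simp
  have "j0 \<in> C1 (kk i)" using liftv_supp[OF fin1(1)[OF conjunct1[OF P]] j0(1)] j0(2) P by simp
  moreover have "j' \<in> C1 (kk i)" if "j' < d1" "T1 $$ (i2,j') \<noteq> 0" for j'
    using T1_supp[OF i2 that] t by simp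
  ultimately show "\<exists>j<d1. R1 $$ (i,j) \<noteq> 0 \<and> (\<forall>j'<d1. T1 $$ (i2,j') \<noteq> 0 \<longrightarrow> coherent_dims V1 j j')"
    using j0(1) Rj0 class_coh[OF conjunct1[OF cls[OF conjunct1[OF P]]]] by blast
qed

lemma link2: "\<forall>i<m'. \<forall>i2<N. Tl $$ (i,i2) \<noteq> 0 \<longrightarrow>
   (\<exists>j<d2. R2 $$ (i,j) \<noteq> 0 \<and> (\<forall>j'<d2. T2 $$ (i2,j') \<noteq> 0 \<longrightarrow> coherent_dims V2 j j'))"
proof (intro allI impI)
  fix i i2 assume i: "i < m'" and i2: "i2 < N" and nz: "Tl $$ (i,i2) \<noteq> 0"
  note t = Tl_nz[OF i i2 nz]
  note P = Pkk[OF i conjunct1[OF t], unfolded Pp_def fst_conv snd_conv]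
  have nz2: "row R2 i \<noteq> 0\<^sub>v d2" using R_zero[OF i] t by simp
  have r2c: "row R2 i \<in> carrier_vec d2" using dR by (intro carrier_vecI) simp
  obtain j0 where j0: "j0 < d2" "row R2 i $ j0 \<noteq> 0" using nz_vec[OF r2c nz2] by blast
  have Rj0: "R2 $$ (i,j0) \<noteq> 0" using j0 i dR by simp
  have "j0 \<in> C2 (kk i)" using liftv_supp[OF fin2(1)[OF conjunct1[OF P]] j0(1)] j0(2) P by simp
  moreover have "j' \<in> C2 (kk i)" if "j' < d2" "T2 $$ (i2,j') \<noteq> 0" for j'
    using T2_supp[OF i2 that] t by simp
  ultimately show "\<exists>j<d2. R2 $$ (i,j) \<noteq> 0 \<and> (\<forall>j'<d2. T2 $$ (i2,j') \<noteq> 0 \<longrightarrow> coherent_dims V2 j j')"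
    using j0(1) Rj0 class_coh[OF conjunct2[OF cls[OF conjunct1[OF P]]]] by blast
qed

lemma simTl: "lin_sim N (qvasr_step Vj) Tl (qvasr_step V')"
  unfolding lin_sim_def
proof (intro conjI allI impI)
  show "dim_col Tl = N" by (rule dTl(2))
  fix u v assume u: "u \<in> carrier_vec N" and v: "v \<in> carrier_vec N" and st: "qvasr_step Vj u v"
  from st obtain r'' a'' where ra: "(r'',a'') \<in> Vj" "dim_vec u = dim_vec r''"
    "v = vec (dim_vec r'') (\<lambda>i. r'' $ i * u $ i) + a''"
    unfolding qvasr_step_def by blast
  from ra(1) consider (one) "(r'',a'') \<in> vasr_image V1 T1" | (two) "(r'',a'') \<in> vasr_image V2 T2"
    unfolding Vj_def by blast
  then show "qvasr_step V' (Tl *\<^sub>v u) (Tl *\<^sub>v v)"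
  proof cases
    case one
    then obtain r a where ra1: "(r,a) \<in> V1" "r'' = vec N (\<lambda>i. r $ (SOME j. j < d1 \<and> T1 $$ (i,j) \<noteq> 0))"
      "a'' = T1 *\<^sub>v a"
      unfolding vasr_image_def dimsT by blast
    have "vec (dim_vec r'') (\<lambda>i. r'' $ i * u $ i) = vec N (\<lambda>i2. r $ (SOME j. j < d1 \<and> T1 $$ (i2,j) \<noteq> 0) * u $ i2)"
      using ra1(2) by (intro eq_vecI) auto
    then have "v = vec N (\<lambda>i2. r $ (SOME j. j < d1 \<and> T1 $$ (i2,j) \<noteq> 0) * u $ i2) + T1 *\<^sub>v a"
      using ra(3) ra1(3) by simp
    then show ?thesis
      using lub_sim[OF Tlc T1c TT1 ra1(1) conjunct1[OF conjunct2[OF V1el[OF ra1(1)]]] R1B[OF ra1(1)]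
          link1 T1_rows u] by simp
  next
    case two
    then obtain r a where ra1: "(r,a) \<in> V2" "r'' = vec N (\<lambda>i. r $ (SOME j. j < d2 \<and> T2 $$ (i,j) \<noteq> 0))"
      "a'' = T2 *\<^sub>v a"
      unfolding vasr_image_def dimsT by blast
    have "vec (dim_vec r'') (\<lambda>i. r'' $ i * u $ i) = vec N (\<lambda>i2. r $ (SOME j. j < d2 \<and> T2 $$ (i2,j) \<noteq> 0) * u $ i2)"
      using ra1(2) by (intro eq_vecI) auto
    then have "v = vec N (\<lambda>i2. r $ (SOME j. j < d2 \<and> T2 $$ (i2,j) \<noteq> 0) * u $ i2) + T2 *\<^sub>v a"
      using ra(3) ra1(3) by simp
    then show ?thesis
      using lub_sim[OF Tlc T2c TT2 ra1(1) conjunct1[OF conjunct2[OF V2el[OF ra1(1)]]] R2B[OF ra1(1)]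
          link2 T2_rows u] by simp
  qed
qed

lemma lub_main: "abs_le (Sj,Vj) (S',V')"
  unfolding abs_le_def prod.case
proof (rule bexI[of _ Tl])
  show "lin_sim (dim_row Sj) (qvasr_step Vj) Tl (qvasr_step V') \<and> Tl * Sj = S'"
    using simTl TlS unfolding dimsT by blast
  show "Tl \<in> carrier_mat m' (dim_row Sj)" unfolding dimsT by (rule Tlc)
qed

end


theorem proposition2:
  fixes n :: nat and S1 S2 S :: "rat mat" and V1 V2 V :: qvasr
  assumes "is_abs n S1 V1" and "is_abs n S2 V2"
    and "normal_abs S1 V1" and "normal_abs S2 V2"
    and "join_result S1 V1 S2 V2 S V"
  shows "normal_abs S V \<and> abs_lub n (S1, V1) (S2, V2) (S, V)"
proof -
  from assms(5) obtain ps Us where J: "distinct ps"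
    "set ps = coh_classes (dim_row S1) V1 \<times> coh_classes (dim_row S2) V2"
    "length Us = length ps"
    "\<forall>k < length ps. is_pushout (pi_mat (dim_row S1) (fst (ps ! k)) * S1)
                      (pi_mat (dim_row S2) (snd (ps ! k)) * S2) (fst (Us ! k)) (snd (Us ! k))"
    "S = mat_of_rows (dim_col S1)
              (concat (map (\<lambda>((C1,C2),(U1,U2)). rows (U1 * pi_mat (dim_row S1) C1 * S1)) (zip ps Us)))"
    "V = vasr_image V1 (mat_of_rows (dim_row S1)
              (concat (map (\<lambda>((C1,C2),(U1,U2)). rows (U1 * pi_mat (dim_row S1) C1)) (zip ps Us))))
          \<union> vasr_image V2 (mat_of_rows (dim_row S2)
              (concat (map (\<lambda>((C1,C2),(U1,U2)). rows (U2 * pi_mat (dim_row S2) C2)) (zip ps Us))))"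
    unfolding join_result_def by blast
  interpret jctx n S1 S2 V1 V2 ps Us
    unfolding jctx_def using assms(1-4) J(1-4) by blast
  have dc: "dim_col S1 = n" using assms(1) unfolding is_abs_def by simp
  have c1: "concat (map (\<lambda>((C1,C2),(U1,U2)). rows (U1 * pi_mat (dim_row S1) C1 * S1)) (zip ps Us)) =
      map (\<lambda>(k,l). row (U1 k * pi_mat d1 (C1 k) * S1) l) I"
    by (rule conv[of "\<lambda>C1 C2 U1 U2. U1 * pi_mat (dim_row S1) C1 * S1"]) simp
  have c2: "concat (map (\<lambda>((C1,C2),(U1,U2)). rows (U1 * pi_mat (dim_row S1) C1)) (zip ps Us)) =
      map (\<lambda>(k,l). row (U1 k * pi_mat d1 (C1 k)) l) I"
    by (rule conv[of "\<lambda>C1 C2 U1 U2. U1 * pi_mat (dim_row S1) C1"]) simp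
  have c3: "concat (map (\<lambda>((C1,C2),(U1,U2)). rows (U2 * pi_mat (dim_row S2) C2)) (zip ps Us)) =
      map (\<lambda>(k,l). row (U2 k * pi_mat d2 (C2 k)) l) I"
    by (rule conv[of "\<lambda>C1 C2 U1 U2. U2 * pi_mat (dim_row S2) C2"]) (use carrier_matD(1)[OF U2c] in simp)
  have SS: "S = Sj" unfolding J(5) c1 dc Sj_def ..
  have VV: "V = Vj" unfolding J(6) c2 c3 Vj_def T1_def T2_def ..
  have lub: "abs_le (Sj,Vj) C'" if "is_upper_bound n (S1,V1) (S2,V2) C'" for C'
  proof -
    obtain S' V' where C': "C' = (S',V')" by (cases C')
    have ia: "is_abs n S' V'" and l1: "abs_le (S1,V1) (S',V')" and l2: "abs_le (S2,V2) (S',V')"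
      using that C' unfolding is_upper_bound_def by auto
    obtain R1 where R1: "R1 \<in> carrier_mat (dim_row S') (dim_row S1)"
      "lin_sim (dim_row S1) (qvasr_step V1) R1 (qvasr_step V')" "R1 * S1 = S'"
      using l1 unfolding abs_le_def by auto
    obtain R2 where R2: "R2 \<in> carrier_mat (dim_row S') (dim_row S2)"
      "lin_sim (dim_row S2) (qvasr_step V2) R2 (qvasr_step V')" "R2 * S2 = S'"
      using l2 unfolding abs_le_def by auto
    have q': "qvasr (dim_row S') V'" using ia unfolding is_abs_def by simp
    interpret L: lubctx n S1 S2 V1 V2 ps Us S' V' R1 R2
      by (unfold_locales) (use q' R1 R2 in auto)
    show ?thesis using L.lub_main C' by simp
  qed
  show ?thesis
    unfolding SS VV abs_lub_def is_upper_bound_def fst_conv snd_conv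
    using normal_Sj absj ub1 ub2 lub unfolding is_upper_bound_def by auto
qed


end
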